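(* Let $r_1,r_3,L>0$. For $r_2>\max(r_1,r_3)$, let $m(y)=r_1\mathbf 1_{y<0}+r_2\mathbf 1_{0\le y<1}+r_3\mathbf 1_{y\ge1}$ and let $\lambda_1(r_2)=\sup\{\lambda : \exists\,\varphi\in W^{2,1}_{\mathrm{loc}}(\mathbb{R}),\ \varphi>0,\ L^{-2}\varphi''+(m+\lambda)\varphi\le0\}$. Let $\underline{L}(r_2)=0$ if $r_1=r_3$ and $\underline{L}(r_2)=\frac{1}{\sqrt{r_2-\max(r_1,r_3)}}\operatorname{arccot}\big(\sqrt{\frac{r_2-\max(r_1,r_3)}{|r_1-r_3|}}\big)$ if $r_1\ne r_3$, and let $\underline{r_2}\ge\max(r_1,r_3)$ be the threshold such that $L>\underline{L}(r_2)$ for all $r_2>\underline{r_2}$ and $L<\underline{L}(r_2)$ for all $r_2\in(\max(r_1,r_3),\underline{r_2})$. Then the map $r_2\in(\max(r_1,r_3),+\infty)\mapsto\lambda_1(r_2)$ is continuous, constant on $(\max(r_1,r_3),\underline{r_2}]$ (possibly empty), decreasing on $(\underline{r_2},+\infty)$, and satisfies $\lambda_1(r_2)\to-\max(r_1,r_3)$ as $r_2\to\max(r_1,r_3)$ and $\lambda_1(r_2)\to-\infty$ as $r_2\to+\infty$.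
   Context: $\operatorname{arccot}$ denotes the inverse of $\cot|_{(0,\pi)}$. *)

theory Defs
  imports "HOL-Analysis.Analysis"
begin

text \<open>arccot = inverse of cot restricted to (0,pi).\<close>
definition arccot :: "real \<Rightarrow> real" where
  "arccot y = pi / 2 - arctan y"

definition mfun :: "real \<Rightarrow> real \<Rightarrow> real \<Rightarrow> real \<Rightarrow> real" where
  "mfun r1 r2 r3 y = (if y < 0 then r1 else if y < 1 then r2 else r3)"

text \<open>phi is in W^{2,1}_loc(R) with (classical) derivative phi' and weak second
  derivative phi'': phi is differentiable everywhere with derivative phi',
  phi'' is Lebesgue integrable on every compact interval and phi' is the
  indefinite integral of phi''.\<close>
definition W21loc :: "(real \<Rightarrow> real) \<Rightarrow> (real \<Rightarrow> real) \<Rightarrow> (real \<Rightarrow> real) \<Rightarrow> bool" where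
  "W21loc \<phi> \<phi>' \<phi>'' \<longleftrightarrow>
     (\<forall>x. (\<phi> has_real_derivative \<phi>' x) (at x)) \<and>
     (\<forall>a b. set_integrable lborel {a..b} \<phi>'') \<and>
     (\<forall>a b. a \<le> b \<longrightarrow> \<phi>' b - \<phi>' a = (LINT t:{a..b}|lborel. \<phi>'' t))"

definition lambda1 :: "real \<Rightarrow> real \<Rightarrow> real \<Rightarrow> real \<Rightarrow> real" where
  "lambda1 L r1 r3 r2 = Sup {lam. \<exists>\<phi> \<phi>' \<phi>''. W21loc \<phi> \<phi>' \<phi>'' \<and> (\<forall>x. \<phi> x > 0) \<and>
      (AE x in lborel. \<phi>'' x / L\<^sup>2 + (mfun r1 r2 r3 x + lam) * \<phi> x \<le> 0)}"

definition Lunder :: "real \<Rightarrow> real \<Rightarrow> real \<Rightarrow> real" where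
  "Lunder r1 r3 r2 = (if r1 = r3 then 0 else
      1 / sqrt (r2 - max r1 r3) * arccot (sqrt ((r2 - max r1 r3) / \<bar>r1 - r3\<bar>)))"

end

theory Submission
  imports Defs
begin


lemma phi_incr:
  assumes W: "W21loc \<phi> \<phi>' \<phi>''"
    and AE: "AE x in lborel. \<phi>'' x / L\<^sup>2 + (mfun r1 r2 r3 x + lam) * \<phi> x \<le> 0"
    and L: "L > 0" and xy: "x \<le> y"
    and B: "\<And>s. x \<le> s \<Longrightarrow> s \<le> y \<Longrightarrow> - (L\<^sup>2) * (mfun r1 r2 r3 s + lam) * \<phi> s \<le> B"
  shows "\<phi>' y - \<phi>' x \<le> B * (y - x)"
proof -
  have eq: "\<phi>' y - \<phi>' x = (LINT t:{x..y}|lborel. \<phi>'' t)" using W xy unfolding W21loc_def by blast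
  have int: "set_integrable lborel {x..y} \<phi>''" using W unfolding W21loc_def by blast
  have intB: "set_integrable lborel {x..y} (\<lambda>_. B)"
    by (rule borel_integrable_atLeastAtMost') (rule continuous_on_const)
  have ae: "AE t\<in>{x..y} in lborel. \<phi>'' t \<le> B"
  proof (rule AE_mp[OF AE], rule AE_I2, intro impI)
    fix t assume h: "\<phi>'' t / L\<^sup>2 + (mfun r1 r2 r3 t + lam) * \<phi> t \<le> 0" and t: "t \<in> {x..y}"
    have L2: "L\<^sup>2 > 0" using L by simp
    have "\<phi>'' t \<le> - (L\<^sup>2) * (mfun r1 r2 r3 t + lam) * \<phi> t"
    proof -
      have "\<phi>'' t / L\<^sup>2 \<le> - ((mfun r1 r2 r3 t + lam) * \<phi> t)" using h by linarith
      then have "\<phi>'' t \<le> - ((mfun r1 r2 r3 t + lam) * \<phi> t) * L\<^sup>2"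
        using L2 by (simp add: divide_le_eq)
      then show ?thesis by (simp add: algebra_simps)
    qed
    also have "\<dots> \<le> B" using B t by auto
    finally show "\<phi>'' t \<le> B" .
  qed
  have "(LINT t:{x..y}|lborel. \<phi>'' t) \<le> (LINT t:{x..y}|lborel. B)"
    by (rule set_integral_mono_AE[OF int intB ae])
  also have "\<dots> = B * (y - x)" using xy by (simp add: set_integral_const)
  finally show ?thesis using eq by simp
qed


lemma mfun_rc: "\<exists>\<eta>>0. \<forall>s. x0 \<le> s \<and> s < x0 + \<eta> \<longrightarrow> mfun r1 r2 r3 s = mfun r1 r2 r3 x0"
proof (cases "x0 < 0")
  case True then show ?thesis by (intro exI[of _ "-x0"]) (auto simp: mfun_def)
next
  case False
  show ?thesis
  proof (cases "x0 < 1")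
    case True then show ?thesis using False by (intro exI[of _ "1-x0"]) (auto simp: mfun_def)
  next
    case False2: False
    then show ?thesis using False by (intro exI[of _ 1]) (auto simp: mfun_def)
  qed
qed

lemma touch:
  fixes \<phi> \<phi>' \<phi>'' \<psi> \<psi>' \<psi>2 :: "real \<Rightarrow> real"
  assumes W: "W21loc \<phi> \<phi>' \<phi>''" and pos: "\<And>x. \<phi> x > 0"
    and AE: "AE x in lborel. \<phi>'' x / L\<^sup>2 + (mfun r1 r2 r3 x + lam) * \<phi> x \<le> 0"
    and L: "L > 0" and ab: "a < b"
    and \<psi>c: "continuous_on {a..b} \<psi>" and \<psi>a: "\<psi> a = 0" and \<psi>b: "\<psi> b = 0"
    and \<psi>pos: "\<And>x. a < x \<Longrightarrow> x < b \<Longrightarrow> \<psi> x > 0"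
    and \<psi>d: "\<And>x. a < x \<Longrightarrow> x < b \<Longrightarrow> (\<psi> has_real_derivative \<psi>' x) (at x)"
    and \<psi>2d: "\<And>x. a < x \<Longrightarrow> x < b \<Longrightarrow> (\<psi>' has_real_derivative \<psi>2 x) (at x within {x..})"
    and \<psi>sub: "\<And>x. a < x \<Longrightarrow> x < b \<Longrightarrow> \<psi>2 x \<ge> - (L\<^sup>2) * (mfun r1 r2 r3 x + \<rho>) * \<psi> x"
    and \<rho>: "\<rho> < lam"
  shows False
proof -
  have \<phi>d: "\<And>x. (\<phi> has_real_derivative \<phi>' x) (at x)" using W unfolding W21loc_def by blast
  have \<phi>cont: "continuous_on {a..b} \<phi>"
    using \<phi>d by (meson DERIV_isCont continuous_at_imp_continuous_on)
  have \<psi>nn: "\<And>x. x \<in> {a..b} \<Longrightarrow> \<psi> x \<ge> 0"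
  proof -
    fix x assume "x \<in> {a..b}"
    then consider "x = a" | "x = b" | "a < x \<and> x < b" by fastforce
    then show "\<psi> x \<ge> 0" using \<psi>a \<psi>b \<psi>pos by cases (auto intro: less_imp_le)
  qed
  define S where "S = {t. \<forall>x\<in>{a..b}. t * \<psi> x \<le> \<phi> x}"
  define c where "c = (a + b) / 2"
  have c: "a < c" "c < b" using ab by (auto simp: c_def)
  have \<psi>c_pos: "\<psi> c > 0" using \<psi>pos c by auto
  have S0: "0 \<in> S" using pos by (auto simp: S_def less_imp_le)
  have Sbdd: "\<And>t. t \<in> S \<Longrightarrow> t \<le> \<phi> c / \<psi> c"
  proof -
    fix t assume "t \<in> S"
    then have "t * \<psi> c \<le> \<phi> c" using c by (auto simp: S_def)
    then show "t \<le> \<phi> c / \<psi> c" using \<psi>c_pos by (simp add: le_divide_eq)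
  qed
  have bdd: "bdd_above S" using Sbdd by (auto simp: bdd_above_def)
  define t where "t = Sup S"
  have tS: "t \<in> S"
  proof -
    have "t * \<psi> x \<le> \<phi> x" if x: "x \<in> {a..b}" for x
    proof (cases "\<psi> x > 0")
      case True
      have "t \<le> \<phi> x / \<psi> x" unfolding t_def
      proof (rule cSup_least)
        show "S \<noteq> {}" using S0 by auto
        fix s assume "s \<in> S"
        then have "s * \<psi> x \<le> \<phi> x" using x by (auto simp: S_def)
        then show "s \<le> \<phi> x / \<psi> x" using True by (simp add: le_divide_eq)
      qed
      then show ?thesis using True by (simp add: le_divide_eq)
    next
      case False
      then have "\<psi> x = 0" using \<psi>nn[OF x] by simp
      then show ?thesis using pos[of x] by simp
    qed
    then show ?thesis by (auto simp: S_def)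
  qed
  have t0: "t \<ge> 0" unfolding t_def using S0 bdd by (rule cSup_upper)
  have "\<exists>x0\<in>{a..b}. \<phi> x0 \<le> t * \<psi> x0"
  proof (rule ccontr)
    assume "\<not> ?thesis"
    then have gpos: "\<And>x. x \<in> {a..b} \<Longrightarrow> \<phi> x - t * \<psi> x > 0" by force
    have gc: "continuous_on {a..b} (\<lambda>x. \<phi> x - t * \<psi> x)"
      by (intro continuous_intros \<phi>cont \<psi>c)
    obtain x1 where x1: "x1 \<in> {a..b}" "\<And>y. y \<in> {a..b} \<Longrightarrow> \<phi> x1 - t * \<psi> x1 \<le> \<phi> y - t * \<psi> y"
      using continuous_attains_inf[OF compact_Icc _ gc] ab by force
    obtain x2 where x2: "x2 \<in> {a..b}" "\<And>y. y \<in> {a..b} \<Longrightarrow> \<psi> y \<le> \<psi> x2"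
      using continuous_attains_sup[OF compact_Icc _ \<psi>c] ab by force
    define g where "g = \<phi> x1 - t * \<psi> x1"
    have g: "g > 0" using gpos[OF x1(1)] by (simp add: g_def)
    have Pm: "\<psi> x2 > 0" using x2(2)[of c] c \<psi>c_pos by auto
    have "t + g / \<psi> x2 \<in> S"
    proof -
      have "(t + g / \<psi> x2) * \<psi> y \<le> \<phi> y" if y: "y \<in> {a..b}" for y
      proof -
        have r: "\<psi> y / \<psi> x2 \<le> 1" using x2(2)[OF y] Pm by simp
        have "(t + g / \<psi> x2) * \<psi> y = t * \<psi> y + g * (\<psi> y / \<psi> x2)" by (simp add: algebra_simps)
        also have "\<dots> \<le> t * \<psi> y + g * 1"
          using r g by (intro add_left_mono mult_left_mono) auto
        also have "\<dots> \<le> \<phi> y" using x1(2)[OF y] by (simp add: g_def)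
        finally show ?thesis .
      qed
      then show ?thesis by (auto simp: S_def)
    qed
    then have "t + g / \<psi> x2 \<le> t" unfolding t_def using bdd by (rule cSup_upper)
    then show False using g Pm by (simp add: add_le_same_cancel1 divide_le_0_iff)
  qed
  then obtain x0 where x0: "x0 \<in> {a..b}" "\<phi> x0 \<le> t * \<psi> x0" by blast
  have tx0: "\<phi> x0 = t * \<psi> x0" using x0 tS by (auto simp: S_def intro: antisym)
  have x0a: "x0 \<noteq> a" using tx0 \<psi>a pos[of a] by auto
  have x0b: "x0 \<noteq> b" using tx0 \<psi>b pos[of b] by auto
  have x0i: "a < x0" "x0 < b" using x0 x0a x0b by auto
  have \<psi>x0: "\<psi> x0 > 0" using \<psi>pos x0i by auto
  have tpos: "t > 0" using tx0 pos[of x0] \<psi>x0 t0 by (metis less_eq_real_def mult_zero_left)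
  define v where "v = (\<lambda>x. \<phi> x - t * \<psi> x)"
  have vnn: "\<And>x. x \<in> {a..b} \<Longrightarrow> v x \<ge> 0" using tS by (auto simp: S_def v_def)
  have vd: "\<And>x. a < x \<Longrightarrow> x < b \<Longrightarrow> (v has_real_derivative (\<phi>' x - t * \<psi>' x)) (at x)"
    unfolding v_def by (intro DERIV_diff DERIV_cmult \<phi>d \<psi>d) auto
  have v0: "v x0 = 0" using tx0 by (simp add: v_def)
  have "\<phi>' x0 - t * \<psi>' x0 = 0"
  proof (rule DERIV_local_min[OF vd[OF x0i]])
    show "0 < min (x0 - a) (b - x0)" using x0i by simp
    show "\<forall>y. \<bar>x0 - y\<bar> < min (x0 - a) (b - x0) \<longrightarrow> v x0 \<le> v y"
      using v0 vnn by (auto simp: abs_if split: if_splits)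
  qed
  then have d0: "\<phi>' x0 = t * \<psi>' x0" by simp
  define cc where "cc = mfun r1 r2 r3 x0"
  obtain \<eta> where \<eta>: "\<eta> > 0" "\<And>s. x0 \<le> s \<Longrightarrow> s < x0 + \<eta> \<Longrightarrow> mfun r1 r2 r3 s = cc"
    using mfun_rc[of x0 r1 r2 r3] unfolding cc_def by blast
  define D where "D = L\<^sup>2 * (lam - \<rho>) * t * \<psi> x0"
  have Dpos: "D > 0" using L \<rho> tpos \<psi>x0 by (simp add: D_def)
  define K where "K = L\<^sup>2 * \<bar>cc + lam\<bar>"
  have K0: "K \<ge> 0" by (simp add: K_def)
  define e0 where "e0 = D / (3 * (K + 1))"
  define e1 where "e1 = D / (3 * t)"
  have e0: "e0 > 0" using Dpos K0 by (simp add: e0_def)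
  have e1: "e1 > 0" using Dpos tpos by (simp add: e1_def)
  have ev1: "eventually (\<lambda>s. dist (\<phi> s) (\<phi> x0) < e0) (at_right x0)"
  proof -
    have "(\<phi> \<longlongrightarrow> \<phi> x0) (at_right x0)"
      using DERIV_isCont[OF \<phi>d[of x0]] by (simp add: isCont_def filterlim_at_split)
    then show ?thesis using e0 by (rule tendstoD)
  qed
  have ev2: "eventually (\<lambda>s. mfun r1 r2 r3 s = cc) (at_right x0)"
    unfolding eventually_at_right_field using \<eta> by (intro exI[of _ "x0 + \<eta>"]) auto
  have ev3: "eventually (\<lambda>y. dist ((\<psi>' y - \<psi>' x0) / (y - x0)) (\<psi>2 x0) < e1) (at_right x0)"
  proof -
    have "((\<lambda>y. (\<psi>' y - \<psi>' x0) / (y - x0)) \<longlongrightarrow> \<psi>2 x0) (at x0 within {x0..})"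
      using \<psi>2d[OF x0i] unfolding has_field_derivative_iff .
    then have "((\<lambda>y. (\<psi>' y - \<psi>' x0) / (y - x0)) \<longlongrightarrow> \<psi>2 x0) (at_right x0)"
      by (rule tendsto_within_subset) auto
    then show ?thesis using e1 by (rule tendstoD)
  qed
  have ev4: "eventually (\<lambda>y. y < b) (at_right x0)"
    unfolding eventually_at_right_field using x0i by (intro exI[of _ b]) auto
  have "eventually (\<lambda>s. dist (\<phi> s) (\<phi> x0) < e0 \<and> mfun r1 r2 r3 s = cc \<and>
      dist ((\<psi>' s - \<psi>' x0) / (s - x0)) (\<psi>2 x0) < e1 \<and> s < b) (at_right x0)"
    using ev1 ev2 ev3 ev4 by eventually_elim auto
  then obtain b' where b': "b' > x0" "\<And>s. x0 < s \<Longrightarrow> s < b' \<Longrightarrow> dist (\<phi> s) (\<phi> x0) < e0 \<and> mfun r1 r2 r3 s = cc \<and>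
      dist ((\<psi>' s - \<psi>' x0) / (s - x0)) (\<psi>2 x0) < e1 \<and> s < b"
    unfolding eventually_at_right_field by blast
  have vneg: "\<phi>' y - t * \<psi>' y < 0" if y: "x0 < y" "y < b'" for y
  proof -
    define B where "B = - (L\<^sup>2) * (cc + lam) * \<phi> x0 + K * e0"
    have "\<phi>' y - \<phi>' x0 \<le> B * (y - x0)"
    proof (rule phi_incr[OF W AE L])
      show "x0 \<le> y" using y by simp
      fix s assume s: "x0 \<le> s" "s \<le> y"
      have ms: "mfun r1 r2 r3 s = cc" and ds: "\<bar>\<phi> s - \<phi> x0\<bar> \<le> e0"
      proof -
        show "mfun r1 r2 r3 s = cc" using b'(2)[of s] s y by (cases "s = x0") (auto simp: cc_def)
        show "\<bar>\<phi> s - \<phi> x0\<bar> \<le> e0" using b'(2)[of s] s y e0 by (cases "s = x0") (auto simp: dist_real_def)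
      qed
      have "- (L\<^sup>2) * (cc + lam) * \<phi> s = - (L\<^sup>2) * (cc + lam) * \<phi> x0 - L\<^sup>2 * ((cc + lam) * (\<phi> s - \<phi> x0))"
        by (simp add: algebra_simps)
      also have "\<dots> \<le> - (L\<^sup>2) * (cc + lam) * \<phi> x0 + K * e0"
      proof -
        have "\<bar>(cc + lam) * (\<phi> s - \<phi> x0)\<bar> \<le> \<bar>cc + lam\<bar> * e0"
          using ds by (simp add: abs_mult mult_left_mono)
        then have "- (L\<^sup>2 * ((cc + lam) * (\<phi> s - \<phi> x0))) \<le> L\<^sup>2 * (\<bar>cc + lam\<bar> * e0)"
          by (smt (verit, best) mult_left_mono zero_le_power2 abs_le_iff mult_minus_right)
        then show ?thesis by (simp add: K_def algebra_simps)
      qed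
      finally show "- (L\<^sup>2) * (mfun r1 r2 r3 s + lam) * \<phi> s \<le> B" using ms by (simp add: B_def)
    qed
    moreover have "\<psi>' y - \<psi>' x0 \<ge> (\<psi>2 x0 - e1) * (y - x0)"
    proof -
      have "dist ((\<psi>' y - \<psi>' x0) / (y - x0)) (\<psi>2 x0) < e1" using b'(2)[OF y] by blast
      then have "(\<psi>' y - \<psi>' x0) / (y - x0) \<ge> \<psi>2 x0 - e1" by (simp add: dist_real_def abs_less_iff)
      then show ?thesis using y by (simp add: le_divide_eq)
    qed
    moreover have sub: "\<psi>2 x0 \<ge> - (L\<^sup>2) * (cc + \<rho>) * \<psi> x0" using \<psi>sub[OF x0i] by (simp add: cc_def)
    moreover have "K * e0 < D / 3"
    proof -
      have "K * e0 = D / 3 * (K / (K + 1))" by (simp add: e0_def field_simps)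
      also have "\<dots> < D / 3" using Dpos K0 by (simp add: mult_less_cancel_left1 divide_less_eq)
      finally show ?thesis .
    qed
    ultimately have "\<phi>' y - t * \<psi>' y \<le> (y - x0) * (B - t * (\<psi>2 x0 - e1))"
    proof -
      assume a1: "\<phi>' y - \<phi>' x0 \<le> B * (y - x0)" and a2: "\<psi>' y - \<psi>' x0 \<ge> (\<psi>2 x0 - e1) * (y - x0)"
      have "\<phi>' y - t * \<psi>' y = (\<phi>' y - \<phi>' x0) - t * (\<psi>' y - \<psi>' x0)" using d0 by (simp add: algebra_simps)
      also have "\<dots> \<le> B * (y - x0) - t * ((\<psi>2 x0 - e1) * (y - x0))"
        using a1 a2 tpos by (smt (verit) mult_left_mono)
      finally show ?thesis by (simp add: algebra_simps)
    qed
    moreover have "B - t * (\<psi>2 x0 - e1) < 0"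
    proof -
      have "t * \<psi>2 x0 \<ge> t * (- (L\<^sup>2) * (cc + \<rho>) * \<psi> x0)" using mult_left_mono[OF sub, of t] tpos by simp
      moreover have "t * e1 = D / 3" using tpos by (simp add: e1_def)
      moreover have "- (L\<^sup>2) * (cc + lam) * \<phi> x0 - t * (- (L\<^sup>2) * (cc + \<rho>) * \<psi> x0) = - D"
        using tx0 by (simp add: D_def algebra_simps)
      ultimately show ?thesis using \<open>K * e0 < D / 3\<close> Dpos unfolding B_def by (simp add: algebra_simps)
    qed
    ultimately show ?thesis using y by (smt (verit) mult_pos_neg)
  qed
  define y where "y = (x0 + min b' b) / 2"
  have y: "x0 < y" "y < b'" "y < b" using b'(1) x0i by (auto simp: y_def)
  obtain z where z: "x0 < z" "z < y" "v y - v x0 = (y - x0) * (\<phi>' z - t * \<psi>' z)"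
    using MVT2[OF y(1), of v "\<lambda>x. \<phi>' x - t * \<psi>' x"] vd x0i y by force
  have "v y < 0" using z v0 vneg[of z] y by (simp add: mult_pos_neg)
  moreover have "v y \<ge> 0" using vnn y x0i by auto
  ultimately show False by simp
qed


definition adm :: "real \<Rightarrow> real \<Rightarrow> real \<Rightarrow> real \<Rightarrow> real \<Rightarrow> bool" where
  "adm L r1 r2 r3 lam \<longleftrightarrow> (\<exists>\<phi> \<phi>' \<phi>''. W21loc \<phi> \<phi>' \<phi>'' \<and> (\<forall>x. \<phi> x > 0) \<and>
      (AE x in lborel. \<phi>'' x / L\<^sup>2 + (mfun r1 r2 r3 x + lam) * \<phi> x \<le> 0))"

lemma lambda1_adm: "lambda1 L r1 r3 r2 = Sup {lam. adm L r1 r2 r3 lam}"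
  unfolding lambda1_def adm_def ..

lemma bump:
  assumes A: "adm L r1 r2 r3 lam" and L: "L > 0" and ccr: "cc + \<rho> > 0" and \<rho>: "\<rho> < lam"
    and k: "k = L * sqrt (cc + \<rho>)"
    and m: "\<And>x. a < x \<Longrightarrow> x < a + pi / k \<Longrightarrow> mfun r1 r2 r3 x = cc"
  shows False
proof -
  obtain \<phi> \<phi>' \<phi>'' where W: "W21loc \<phi> \<phi>' \<phi>''" and pos: "\<And>x. \<phi> x > 0"
    and AE: "AE x in lborel. \<phi>'' x / L\<^sup>2 + (mfun r1 r2 r3 x + lam) * \<phi> x \<le> 0"
    using A unfolding adm_def by blast
  have kpos: "k > 0" using L ccr k by simp
  have k2: "k\<^sup>2 = L\<^sup>2 * (cc + \<rho>)" using ccr k by (simp add: power_mult_distrib)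
  show False
  proof (rule touch[OF W pos AE L, of a "a + pi / k" "\<lambda>x. sin (k * (x - a))" "\<lambda>x. k * cos (k * (x - a))"
        "\<lambda>x. - (k\<^sup>2) * sin (k * (x - a))" \<rho>])
    show "a < a + pi / k" using kpos by simp
    show "continuous_on {a..a + pi / k} (\<lambda>x. sin (k * (x - a)))" by (intro continuous_intros)
    show "sin (k * (a - a)) = 0" by simp
    show "sin (k * (a + pi / k - a)) = 0" using kpos by simp
    show "\<rho> < lam" by fact
    fix x assume x: "a < x" "x < a + pi / k"
    have kx: "0 < k * (x - a)" "k * (x - a) < pi" using x kpos by (auto simp: field_simps)
    show "0 < sin (k * (x - a))" using kx by (rule sin_gt_zero)
    show "((\<lambda>x. sin (k * (x - a))) has_real_derivative k * cos (k * (x - a))) (at x)"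
      by (auto intro!: derivative_eq_intros)
    show "((\<lambda>x. k * cos (k * (x - a))) has_real_derivative - (k\<^sup>2) * sin (k * (x - a))) (at x within {x..})"
      by (auto intro!: derivative_eq_intros simp: power2_eq_square)
    show "- (L\<^sup>2) * (mfun r1 r2 r3 x + \<rho>) * sin (k * (x - a)) \<le> - (k\<^sup>2) * sin (k * (x - a))"
      using m[OF x] k2 by simp
  qed
qed

lemma adm_le_r3:
  assumes A: "adm L r1 r2 r3 lam" and L: "L > 0" shows "lam \<le> - r3"
proof (rule ccontr)
  assume "\<not> lam \<le> - r3"
  define \<rho> where "\<rho> = (lam - r3) / 2"
  have ccr: "r3 + \<rho> > 0" using \<open>\<not> lam \<le> - r3\<close> unfolding \<rho>_def by (simp add: field_simps)
  have \<rho>: "\<rho> < lam" using \<open>\<not> lam \<le> - r3\<close> unfolding \<rho>_def by (simp add: field_simps)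
  have kpos: "L * sqrt (r3 + \<rho>) > 0" using L ccr by simp
  show False
    by (rule bump[OF A L ccr \<rho> refl, of 1]) (use kpos in \<open>auto simp: mfun_def\<close>)
qed

lemma adm_le_r1:
  assumes A: "adm L r1 r2 r3 lam" and L: "L > 0" shows "lam \<le> - r1"
proof (rule ccontr)
  assume "\<not> lam \<le> - r1"
  define \<rho> where "\<rho> = (lam - r1) / 2"
  have ccr: "r1 + \<rho> > 0" using \<open>\<not> lam \<le> - r1\<close> unfolding \<rho>_def by (simp add: field_simps)
  have \<rho>: "\<rho> < lam" using \<open>\<not> lam \<le> - r1\<close> unfolding \<rho>_def by (simp add: field_simps)
  have kpos: "L * sqrt (r1 + \<rho>) > 0" using L ccr by simp
  show False
    by (rule bump[OF A L ccr \<rho> refl, of "- pi / (L * sqrt (r1 + \<rho>))"]) (use kpos in \<open>auto simp: mfun_def\<close>)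
qed



definition glue :: "(real \<Rightarrow> real) \<Rightarrow> (real \<Rightarrow> real) \<Rightarrow> (real \<Rightarrow> real) \<Rightarrow> real \<Rightarrow> real" where
  "glue f1 f2 f3 x = (if x < 0 then f1 x else if x < 1 then f2 x else f3 x)"

lemma loc_deriv:
  fixes f g :: "real \<Rightarrow> real"
  assumes "(g has_real_derivative D) (at x)" "d > 0" "\<And>y. \<bar>y - x\<bar> < d \<Longrightarrow> f y = g y"
  shows "(f has_real_derivative D) (at x)"
  using has_field_derivative_transform_within[of g D x UNIV d f] assms
  by (auto simp: dist_real_def)

lemma deriv_split:
  fixes f g h :: "real \<Rightarrow> real"
  assumes g: "(g has_real_derivative D) (at x)" and h: "(h has_real_derivative D) (at x)"
    and d: "d > 0"
    and fg: "\<And>y. x - d < y \<Longrightarrow> y < x \<Longrightarrow> f y = g y" and fh: "\<And>y. x \<le> y \<Longrightarrow> y < x + d \<Longrightarrow> f y = h y"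
    and gh: "g x = h x"
  shows "(f has_real_derivative D) (at x)"
proof -
  have fx: "f x = h x" using fh d by simp
  have 1: "((\<lambda>y. (g y - g x) / (y - x)) \<longlongrightarrow> D) (at_left x)"
    using g unfolding has_field_derivative_iff by (rule tendsto_within_subset) auto
  have 2: "((\<lambda>y. (h y - h x) / (y - x)) \<longlongrightarrow> D) (at_right x)"
    using h unfolding has_field_derivative_iff by (rule tendsto_within_subset) auto
  have "((\<lambda>y. (f y - f x) / (y - x)) \<longlongrightarrow> D) (at_left x)"
    apply (rule Lim_transform_eventually[OF 1])
    unfolding eventually_at_left_field using fg fx gh d by (auto intro!: exI[of _ "x - d"])
  moreover have "((\<lambda>y. (f y - f x) / (y - x)) \<longlongrightarrow> D) (at_right x)"
    apply (rule Lim_transform_eventually[OF 2])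
    unfolding eventually_at_right_field using fh fx d by (auto intro!: exI[of _ "x + d"])
  ultimately show ?thesis unfolding has_field_derivative_iff
    by (simp add: filterlim_at_split)
qed

lemma cont_split:
  fixes f g h :: "real \<Rightarrow> real"
  assumes g: "isCont g x" and h: "isCont h x"
    and d: "d > 0"
    and fg: "\<And>y. x - d < y \<Longrightarrow> y < x \<Longrightarrow> f y = g y" and fh: "\<And>y. x \<le> y \<Longrightarrow> y < x + d \<Longrightarrow> f y = h y"
    and gh: "g x = h x"
  shows "isCont f x"
proof -
  have fx: "f x = h x" using fh d by simp
  have 1: "(g \<longlongrightarrow> f x) (at_left x)" using g fx gh by (simp add: isCont_def filterlim_at_split)
  have 2: "(h \<longlongrightarrow> f x) (at_right x)" using h fx by (simp add: isCont_def filterlim_at_split)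
  have "(f \<longlongrightarrow> f x) (at_left x)"
    apply (rule Lim_transform_eventually[OF 1])
    unfolding eventually_at_left_field using fg fx gh d by (auto intro!: exI[of _ "x - d"])
  moreover have "(f \<longlongrightarrow> f x) (at_right x)"
    apply (rule Lim_transform_eventually[OF 2])
    unfolding eventually_at_right_field using fh fx d by (auto intro!: exI[of _ "x + d"])
  ultimately show ?thesis unfolding isCont_def by (simp add: filterlim_at_split)
qed

lemma loc_cont:
  fixes f g :: "real \<Rightarrow> real"
  assumes "isCont g x" "d > 0" "\<And>y. \<bar>y - x\<bar> < d \<Longrightarrow> f y = g y"
  shows "isCont f x"
proof -
  have "eventually (\<lambda>y. f y = g y) (nhds x)"
    unfolding eventually_nhds_metric using assms(2,3) by (auto simp: dist_real_def)
  then show ?thesis using assms(1) isCont_cong by blast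
qed

lemma glue_deriv:
  assumes d1: "\<And>x. (f1 has_real_derivative f1' x) (at x)"
    and d2: "\<And>x. (f2 has_real_derivative f2' x) (at x)"
    and d3: "\<And>x. (f3 has_real_derivative f3' x) (at x)"
    and m0: "f1 0 = f2 0" "f1' 0 = f2' 0" and m1: "f2 1 = f3 1" "f2' 1 = f3' 1"
  shows "(glue f1 f2 f3 has_real_derivative glue f1' f2' f3' x) (at x)"
proof -
  consider "x < 0" | "x = 0" | "0 < x \<and> x < 1" | "x = 1" | "x > 1" by linarith
  then show ?thesis
  proof cases
    case 1
    then have e: "glue f1' f2' f3' x = f1' x" by (simp add: glue_def)
    show ?thesis unfolding e
      by (rule loc_deriv[OF d1, where d="-x"]) (use 1 in \<open>auto simp: glue_def\<close>)
  next
    case 2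
    then have e: "glue f1' f2' f3' x = f1' x" using m0(2) by (simp add: glue_def)
    have h: "(f2 has_real_derivative f1' x) (at x)" using d2[of x] m0(2) 2 by simp
    show ?thesis unfolding e
      by (rule deriv_split[OF d1 h, where d=1]) (use 2 m0(1) in \<open>auto simp: glue_def\<close>)
  next
    case 3
    then have e: "glue f1' f2' f3' x = f2' x" by (simp add: glue_def)
    show ?thesis unfolding e
      by (rule loc_deriv[OF d2, where d="min x (1 - x)"]) (use 3 in \<open>auto simp: glue_def\<close>)
  next
    case 4
    then have e: "glue f1' f2' f3' x = f2' x" by (simp add: glue_def m1)
    have h: "(f3 has_real_derivative f2' x) (at x)" using d3[of x] m1(2) 4 by simp
    show ?thesis unfolding e
      by (rule deriv_split[OF d2 h, where d=1]) (use 4 m1(1) in \<open>auto simp: glue_def\<close>)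
  next
    case 5
    then have e: "glue f1' f2' f3' x = f3' x" by (simp add: glue_def)
    show ?thesis unfolding e
      by (rule loc_deriv[OF d3, where d="x - 1"]) (use 5 in \<open>auto simp: glue_def\<close>)
  qed
qed

lemma glue_cont:
  assumes c1: "\<And>x. isCont f1 x" and c2: "\<And>x. isCont f2 x" and c3: "\<And>x. isCont f3 x"
    and m0: "f1 0 = f2 0" and m1: "f2 1 = f3 1"
  shows "isCont (glue f1 f2 f3) x"
proof -
  consider "x < 0" | "x = 0" | "0 < x \<and> x < 1" | "x = 1" | "x > 1" by linarith
  then show ?thesis
  proof cases
    case 1 then show ?thesis
      by (intro loc_cont[OF c1, where d="-x"]) (auto simp: glue_def)
  next
    case 2 then show ?thesis using m0
      by (intro cont_split[OF c1 c2, where d=1]) (auto simp: glue_def)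
  next
    case 3 then show ?thesis
      by (intro loc_cont[OF c2, where d="min x (1 - x)"]) (auto simp: glue_def)
  next
    case 4 then show ?thesis using m1
      by (intro cont_split[OF c2 c3, where d=1]) (auto simp: glue_def)
  next
    case 5 then show ?thesis
      by (intro loc_cont[OF c3, where d="x - 1"]) (auto simp: glue_def)
  qed
qed

lemma glue_rderiv:
  assumes d1: "\<And>x. (f1 has_real_derivative f1' x) (at x)"
    and d2: "\<And>x. (f2 has_real_derivative f2' x) (at x)"
    and d3: "\<And>x. (f3 has_real_derivative f3' x) (at x)"
  shows "(glue f1 f2 f3 has_real_derivative glue f1' f2' f3' x) (at x within {x..})"
proof -
  consider "x < 0" | "0 \<le> x \<and> x < 1" | "x \<ge> 1" by linarith
  then show ?thesis
  proof cases
    case 1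
    then have e: "glue f1' f2' f3' x = f1' x" by (simp add: glue_def)
    show ?thesis unfolding e
      by (rule has_field_derivative_transform_within[OF has_field_derivative_at_within[OF d1], where d="-x"])
        (use 1 in \<open>auto simp: glue_def dist_real_def\<close>)
  next
    case 2
    then have e: "glue f1' f2' f3' x = f2' x" by (simp add: glue_def)
    show ?thesis unfolding e
      by (rule has_field_derivative_transform_within[OF has_field_derivative_at_within[OF d2], where d="1-x"])
        (use 2 in \<open>auto simp: glue_def dist_real_def\<close>)
  next
    case 3
    then have e: "glue f1' f2' f3' x = f3' x" by (simp add: glue_def)
    show ?thesis unfolding e
      by (rule has_field_derivative_transform_within[OF has_field_derivative_at_within[OF d3], where d="1"])
        (use 3 in \<open>auto simp: glue_def dist_real_def\<close>)
  qed
qed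



lemma set_integrable_ind:
  fixes f :: "real \<Rightarrow> real"
  assumes "continuous_on UNIV f" "S \<in> sets lborel"
  shows "set_integrable lborel {a..b} (\<lambda>x. indicator S x * f x)"
proof -
  have "set_integrable lborel {a..b} f"
    by (rule borel_integrable_atLeastAtMost') (rule continuous_on_subset[OF assms(1)], simp)
  then have "set_integrable lborel ({a..b} \<inter> S) f"
    by (rule set_integrable_subset) (use assms(2) in auto)
  moreover have "(\<lambda>x. indicator ({a..b} \<inter> S) x *\<^sub>R f x) = (\<lambda>x. indicator {a..b} x *\<^sub>R (indicator S x * f x))"
    by (auto simp: indicator_def fun_eq_iff)
  ultimately show ?thesis unfolding set_integrable_def by simp
qed

lemma glue_ftc:
  assumes d1: "\<And>x. (f1 has_real_derivative f1' x) (at x)"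
    and d2: "\<And>x. (f2 has_real_derivative f2' x) (at x)"
    and d3: "\<And>x. (f3 has_real_derivative f3' x) (at x)"
    and c1: "continuous_on UNIV f1'" and c2: "continuous_on UNIV f2'" and c3: "continuous_on UNIV f3'"
    and m0: "f1 0 = f2 0" and m1: "f2 1 = f3 1" and ab: "a \<le> b"
  shows "set_integrable lborel {a..b} (glue f1' f2' f3')"
    and "glue f1 f2 f3 b - glue f1 f2 f3 a = (LINT t:{a..b}|lborel. glue f1' f2' f3' t)"
proof -
  have eq: "glue f1' f2' f3' = (\<lambda>x. (indicator {..<0} x * f1' x + indicator {0..<1} x * f2' x) + indicator {1..} x * f3' x)"
    by (auto simp: glue_def fun_eq_iff indicator_def)
  show int: "set_integrable lborel {a..b} (glue f1' f2' f3')"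
    unfolding eq by (intro set_integral_add set_integrable_ind c1 c2 c3) auto
  have cont: "continuous_on {a..b} (glue f1 f2 f3)"
    by (intro continuous_at_imp_continuous_on ballI glue_cont[OF DERIV_isCont[OF d1] DERIV_isCont[OF d2] DERIV_isCont[OF d3] m0 m1])
  have der: "(glue f1 f2 f3 has_vector_derivative glue f1' f2' f3' x) (at x)" if x: "x \<in> {a..b} - {0, 1}" for x
  proof -
    consider "x < 0" | "0 < x \<and> x < 1" | "x > 1" using x by force
    then have "(glue f1 f2 f3 has_real_derivative glue f1' f2' f3' x) (at x)"
    proof cases
      case 1
      then have e: "glue f1' f2' f3' x = f1' x" by (simp add: glue_def)
      show ?thesis unfolding e
        by (rule loc_deriv[OF d1, where d="-x"]) (use 1 in \<open>auto simp: glue_def\<close>)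
    next
      case 2
      then have e: "glue f1' f2' f3' x = f2' x" by (simp add: glue_def)
      show ?thesis unfolding e
        by (rule loc_deriv[OF d2, where d="min x (1 - x)"]) (use 2 in \<open>auto simp: glue_def\<close>)
    next
      case 3
      then have e: "glue f1' f2' f3' x = f3' x" by (simp add: glue_def)
      show ?thesis unfolding e
        by (rule loc_deriv[OF d3, where d="x - 1"]) (use 3 in \<open>auto simp: glue_def\<close>)
    qed
    then show ?thesis by (simp add: has_real_derivative_iff_has_vector_derivative)
  qed
  have "(glue f1' f2' f3' has_integral (glue f1 f2 f3 b - glue f1 f2 f3 a)) {a..b}"
    by (rule fundamental_theorem_of_calculus_strong[of "{0,1}"]) (use ab der cont in auto)
  then show "glue f1 f2 f3 b - glue f1 f2 f3 a = (LINT t:{a..b}|lborel. glue f1' f2' f3' t)"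
    using set_borel_integral_eq_integral(2)[OF int] by (simp add: integral_unique)
qed



definition Fn :: "real \<Rightarrow> real \<Rightarrow> real \<Rightarrow> real \<Rightarrow> real \<Rightarrow> real" where
  "Fn L r1 r3 r2 \<nu> = L * sqrt (r2 - \<nu>) - arctan (L * sqrt (\<nu> - r1) / (L * sqrt (r2 - \<nu>)))
      - arctan (L * sqrt (\<nu> - r3) / (L * sqrt (r2 - \<nu>)))"

lemma mfun_glue: "mfun r1 r2 r3 x = glue (\<lambda>_. r1) (\<lambda>_. r2) (\<lambda>_. r3) x"
  by (simp add: mfun_def glue_def)

lemma tan_cos: "cos x \<noteq> 0 \<Longrightarrow> tan x * cos x = sin x"
  by (simp add: tan_def)

lemma super:
  assumes L: "L > 0" and n1: "r1 \<le> \<nu>" and n3: "r3 \<le> \<nu>" and n2: "\<nu> < r2"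
    and F: "Fn L r1 r3 r2 \<nu> \<le> 0"
  shows "adm L r1 r2 r3 (- \<nu>)"
proof -
  define \<kappa> where "\<kappa> = L * sqrt (r2 - \<nu>)"
  define \<alpha>1 where "\<alpha>1 = L * sqrt (\<nu> - r1)"
  define \<alpha>3 where "\<alpha>3 = L * sqrt (\<nu> - r3)"
  define A1 where "A1 = arctan (\<alpha>1 / \<kappa>)"
  define A3 where "A3 = arctan (\<alpha>3 / \<kappa>)"
  define \<theta> where "\<theta> = max 0 (\<kappa> - A3)"
  define \<beta> where "\<beta> = \<kappa> * tan \<theta>"
  define \<gamma> where "\<gamma> = \<kappa> * tan (\<kappa> - \<theta>)"
  have \<kappa>: "\<kappa> > 0" using L n2 by (simp add: \<kappa>_def)
  have a1: "\<alpha>1 \<ge> 0" using L n1 by (simp add: \<alpha>1_def)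
  have a3: "\<alpha>3 \<ge> 0" using L n3 by (simp add: \<alpha>3_def)
  have k2: "\<kappa>\<^sup>2 = L\<^sup>2 * (r2 - \<nu>)" using n2 by (simp add: \<kappa>_def power_mult_distrib)
  have a12: "\<alpha>1\<^sup>2 = L\<^sup>2 * (\<nu> - r1)" using n1 by (simp add: \<alpha>1_def power_mult_distrib)
  have a32: "\<alpha>3\<^sup>2 = L\<^sup>2 * (\<nu> - r3)" using n3 by (simp add: \<alpha>3_def power_mult_distrib)
  have FF: "\<kappa> - A1 - A3 \<le> 0" using F by (simp add: Fn_def \<kappa>_def \<alpha>1_def \<alpha>3_def A1_def A3_def)
  have A1b: "0 \<le> A1" "A1 < pi/2"
    using a1 \<kappa> arctan_ubound[of "\<alpha>1 / \<kappa>"] unfolding A1_def by auto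
  have A3b: "0 \<le> A3" "A3 < pi/2"
    using a3 \<kappa> arctan_ubound[of "\<alpha>3 / \<kappa>"] unfolding A3_def by auto
  have th: "0 \<le> \<theta>" "\<theta> \<le> A1" "0 \<le> \<kappa> - \<theta>" "\<kappa> - \<theta> \<le> A3"
    using FF A1b A3b \<kappa> by (auto simp: \<theta>_def)
  have cth: "cos \<theta> > 0" using th A1b by (intro cos_gt_zero_pi) auto
  have ckth: "cos (\<kappa> - \<theta>) > 0" using th A3b by (intro cos_gt_zero_pi) auto
  have tb: "0 \<le> tan \<theta>" "tan \<theta> \<le> \<alpha>1 / \<kappa>"
  proof -
    show "0 \<le> tan \<theta>" using tan_mono_le[of 0 \<theta>] th A1b by simp
    have "tan \<theta> \<le> tan A1" using tan_mono_le[of \<theta> A1] th A1b by simp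
    then show "tan \<theta> \<le> \<alpha>1 / \<kappa>" by (simp add: A1_def tan_arctan)
  qed
  have tg: "0 \<le> tan (\<kappa> - \<theta>)" "tan (\<kappa> - \<theta>) \<le> \<alpha>3 / \<kappa>"
  proof -
    show "0 \<le> tan (\<kappa> - \<theta>)" using tan_mono_le[of 0 "\<kappa> - \<theta>"] th A3b by simp
    have "tan (\<kappa> - \<theta>) \<le> tan A3" using tan_mono_le[of "\<kappa> - \<theta>" A3] th A3b by simp
    then show "tan (\<kappa> - \<theta>) \<le> \<alpha>3 / \<kappa>" by (simp add: A3_def tan_arctan)
  qed
  have \<beta>: "0 \<le> \<beta>" "\<beta> \<le> \<alpha>1" using tb \<kappa> by (auto simp: \<beta>_def pos_le_divide_eq mult.commute)
  have \<gamma>: "0 \<le> \<gamma>" "\<gamma> \<le> \<alpha>3" using tg \<kappa> by (auto simp: \<gamma>_def pos_le_divide_eq mult.commute)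
  have \<beta>2: "\<beta>\<^sup>2 \<le> \<alpha>1\<^sup>2" using \<beta> by (simp add: power_mono)
  have \<gamma>2: "\<gamma>\<^sup>2 \<le> \<alpha>3\<^sup>2" using \<gamma> by (simp add: power_mono)
  define f1 where "f1 = (\<lambda>x. cos \<theta> * exp (\<beta> * x))"
  define f1' where "f1' = (\<lambda>x. \<beta> * cos \<theta> * exp (\<beta> * x))"
  define f1'' where "f1'' = (\<lambda>x. \<beta>\<^sup>2 * cos \<theta> * exp (\<beta> * x))"
  define f2 where "f2 = (\<lambda>x. cos (\<kappa> * x - \<theta>))"
  define f2' where "f2' = (\<lambda>x. - \<kappa> * sin (\<kappa> * x - \<theta>))"
  define f2'' where "f2'' = (\<lambda>x. - (\<kappa>\<^sup>2) * cos (\<kappa> * x - \<theta>))"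
  define f3 where "f3 = (\<lambda>x. cos (\<kappa> - \<theta>) * exp (- \<gamma> * (x - 1)))"
  define f3' where "f3' = (\<lambda>x. - \<gamma> * cos (\<kappa> - \<theta>) * exp (- \<gamma> * (x - 1)))"
  define f3'' where "f3'' = (\<lambda>x. \<gamma>\<^sup>2 * cos (\<kappa> - \<theta>) * exp (- \<gamma> * (x - 1)))"
  have d1: "\<And>x. (f1 has_real_derivative f1' x) (at x)"
    unfolding f1_def f1'_def by (auto intro!: derivative_eq_intros)
  have d1': "\<And>x. (f1' has_real_derivative f1'' x) (at x)"
    unfolding f1'_def f1''_def by (auto intro!: derivative_eq_intros simp: power2_eq_square)
  have d2: "\<And>x. (f2 has_real_derivative f2' x) (at x)"
    unfolding f2_def f2'_def by (auto intro!: derivative_eq_intros)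
  have d2': "\<And>x. (f2' has_real_derivative f2'' x) (at x)"
    unfolding f2'_def f2''_def by (auto intro!: derivative_eq_intros simp: power2_eq_square)
  have d3: "\<And>x. (f3 has_real_derivative f3' x) (at x)"
    unfolding f3_def f3'_def by (auto intro!: derivative_eq_intros)
  have d3': "\<And>x. (f3' has_real_derivative f3'' x) (at x)"
    unfolding f3'_def f3''_def by (auto intro!: derivative_eq_intros simp: power2_eq_square)
  have c1: "continuous_on UNIV f1''" unfolding f1''_def by (intro continuous_intros)
  have c2: "continuous_on UNIV f2''" unfolding f2''_def by (intro continuous_intros)
  have c3: "continuous_on UNIV f3''" unfolding f3''_def by (intro continuous_intros)
  have m0: "f1 0 = f2 0" by (simp add: f1_def f2_def)
  have m0': "f1' 0 = f2' 0"
    using tan_cos[of \<theta>] cth by (simp add: f1'_def f2'_def \<beta>_def)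
  have m1: "f2 1 = f3 1" by (simp add: f2_def f3_def)
  have m1': "f2' 1 = f3' 1"
    using tan_cos[of "\<kappa> - \<theta>"] ckth by (simp add: f2'_def f3'_def \<gamma>_def)
  define \<phi> where "\<phi> = glue f1 f2 f3"
  define \<phi>' where "\<phi>' = glue f1' f2' f3'"
  define \<phi>'' where "\<phi>'' = glue f1'' f2'' f3''"
  have W: "W21loc \<phi> \<phi>' \<phi>''"
    unfolding W21loc_def
  proof (intro conjI allI impI)
    fix x :: real show "(\<phi> has_real_derivative \<phi>' x) (at x)"
      unfolding \<phi>_def \<phi>'_def by (rule glue_deriv[OF d1 d2 d3 m0 m0' m1 m1'])
  next
    fix a b :: real
    show "set_integrable lborel {a..b} \<phi>''"
    proof (cases "a \<le> b")
      case True then show ?thesis unfolding \<phi>''_def by (rule glue_ftc(1)[OF d1' d2' d3' c1 c2 c3 m0' m1'])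
    next
      case False then show ?thesis by (simp add: set_integrable_def)
    qed
  next
    fix a b :: real assume ab: "a \<le> b"
    show "\<phi>' b - \<phi>' a = (LINT t:{a..b}|lborel. \<phi>'' t)"
      unfolding \<phi>'_def \<phi>''_def by (rule glue_ftc(2)[OF d1' d2' d3' c1 c2 c3 m0' m1' ab])
  qed
  have pos: "\<forall>x. \<phi> x > 0"
  proof
    fix x :: real
    consider "x < 0" | "0 \<le> x \<and> x < 1" | "x \<ge> 1" by linarith
    then show "\<phi> x > 0"
    proof cases
      case 1 then show ?thesis using cth by (simp add: \<phi>_def glue_def f1_def)
    next
      case 2
      have "- (pi/2) < \<kappa> * x - \<theta>" using th A1b \<kappa> 2 by (smt (verit) mult_nonneg_nonneg)
      moreover have "\<kappa> * x - \<theta> < pi/2"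
      proof -
        have "\<kappa> * x \<le> \<kappa>" using 2 \<kappa> by (simp add: mult_le_cancel_left1)
        then show ?thesis using th A3b by linarith
      qed
      ultimately show ?thesis using 2 by (simp add: \<phi>_def glue_def f2_def cos_gt_zero_pi)
    next
      case 3 then show ?thesis using ckth by (simp add: \<phi>_def glue_def f3_def)
    qed
  qed
  have ineq: "\<phi>'' x / L\<^sup>2 + (mfun r1 r2 r3 x + - \<nu>) * \<phi> x \<le> 0" for x
  proof -
    have L2: "L\<^sup>2 > 0" using L by simp
    consider "x < 0" | "0 \<le> x \<and> x < 1" | "x \<ge> 1" by linarith
    then show ?thesis
    proof cases
      case 1
      have "\<phi>'' x / L\<^sup>2 + (mfun r1 r2 r3 x + - \<nu>) * \<phi> x = (\<beta>\<^sup>2 - \<alpha>1\<^sup>2) / L\<^sup>2 * (cos \<theta> * exp (\<beta> * x))"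
        using 1 L2 by (simp add: \<phi>_def \<phi>''_def glue_def f1''_def f1_def mfun_def a12 field_simps)
      also have "\<dots> \<le> 0" using \<beta>2 cth L2
        by (intro mult_nonpos_nonneg divide_nonpos_pos) auto
      finally show ?thesis .
    next
      case 2
      have "\<phi>'' x / L\<^sup>2 + (mfun r1 r2 r3 x + - \<nu>) * \<phi> x = 0"
        using 2 L2 by (simp add: \<phi>_def \<phi>''_def glue_def f2''_def f2_def mfun_def k2 field_simps)
      then show ?thesis by simp
    next
      case 3
      have "\<phi>'' x / L\<^sup>2 + (mfun r1 r2 r3 x + - \<nu>) * \<phi> x = (\<gamma>\<^sup>2 - \<alpha>3\<^sup>2) / L\<^sup>2 * (cos (\<kappa> - \<theta>) * exp (- \<gamma> * (x - 1)))"
        using 3 L2 by (simp add: \<phi>_def \<phi>''_def glue_def f3''_def f3_def mfun_def a32 field_simps)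
      also have "\<dots> \<le> 0" using \<gamma>2 ckth L2
        by (intro mult_nonpos_nonneg divide_nonpos_pos) auto
      finally show ?thesis .
    qed
  qed
  show ?thesis unfolding adm_def using W pos ineq by blast
qed



lemma sub_big:
  assumes L: "L > 0" and n2: "\<nu> < r2" and big: "L * sqrt (r2 - \<nu>) \<ge> pi"
    and A: "adm L r1 r2 r3 lam"
  shows "lam \<le> - \<nu>"
proof (rule ccontr)
  assume "\<not> lam \<le> - \<nu>"
  then have \<rho>: "- \<nu> < lam" by simp
  obtain \<phi> \<phi>' \<phi>'' where W: "W21loc \<phi> \<phi>' \<phi>''" and pos: "\<And>x. \<phi> x > 0"
    and AE: "AE x in lborel. \<phi>'' x / L\<^sup>2 + (mfun r1 r2 r3 x + lam) * \<phi> x \<le> 0"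
    using A unfolding adm_def by blast
  have k2: "(L * sqrt (r2 - \<nu>))\<^sup>2 = L\<^sup>2 * (r2 - \<nu>)" using n2 by (simp add: power_mult_distrib)
  have pk: "pi\<^sup>2 \<le> L\<^sup>2 * (r2 - \<nu>)" using big k2 power_mono[OF big, of 2] by simp
  show False
  proof (rule touch[OF W pos AE L, of 0 1 "\<lambda>x. sin (pi * x)" "\<lambda>x. pi * cos (pi * x)"
        "\<lambda>x. - (pi\<^sup>2) * sin (pi * x)" "- \<nu>"])
    show "continuous_on {0..1} (\<lambda>x. sin (pi * x))" by (intro continuous_intros)
    fix x :: real assume x: "0 < x" "x < 1"
    have sx: "sin (pi * x) > 0" using x by (intro sin_gt_zero) auto
    show "0 < sin (pi * x)" by (rule sx)
    show "((\<lambda>x. sin (pi * x)) has_real_derivative pi * cos (pi * x)) (at x)"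
      by (auto intro!: derivative_eq_intros)
    show "((\<lambda>x. pi * cos (pi * x)) has_real_derivative - (pi\<^sup>2) * sin (pi * x)) (at x within {x..})"
      by (auto intro!: derivative_eq_intros simp: power2_eq_square)
    have "mfun r1 r2 r3 x = r2" using x by (simp add: mfun_def)
    then show "- (L\<^sup>2) * (mfun r1 r2 r3 x + - \<nu>) * sin (pi * x) \<le> - (pi\<^sup>2) * sin (pi * x)"
      using pk sx by (simp add: mult_right_mono)
  qed (use \<rho> in auto)
qed

lemma sub_small:
  assumes L: "L > 0" and n1: "r1 < \<nu>" and n3: "r3 < \<nu>" and n2: "\<nu> < r2"
    and F: "Fn L r1 r3 r2 \<nu> > 0" and small: "L * sqrt (r2 - \<nu>) < pi"
    and A: "adm L r1 r2 r3 lam"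
  shows "lam \<le> - \<nu>"
proof (rule ccontr)
  assume "\<not> lam \<le> - \<nu>"
  then have \<rho>: "- \<nu> < lam" by simp
  obtain \<phi> \<phi>' \<phi>'' where W: "W21loc \<phi> \<phi>' \<phi>''" and pos: "\<And>x. \<phi> x > 0"
    and AE: "AE x in lborel. \<phi>'' x / L\<^sup>2 + (mfun r1 r2 r3 x + lam) * \<phi> x \<le> 0"
    using A unfolding adm_def by blast
  define \<kappa> where "\<kappa> = L * sqrt (r2 - \<nu>)"
  define \<alpha>1 where "\<alpha>1 = L * sqrt (\<nu> - r1)"
  define \<alpha>3 where "\<alpha>3 = L * sqrt (\<nu> - r3)"
  define A1 where "A1 = arctan (\<alpha>1 / \<kappa>)"
  define A3 where "A3 = arctan (\<alpha>3 / \<kappa>)"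
  define \<delta> where "\<delta> = \<kappa> - A1 - A3"
  define P1 where "P1 = pi/2 - A1"
  define P3 where "P3 = pi/2 - A3"
  define \<theta> where "\<theta> = A1 + \<delta> * P1 / (P1 + P3)"
  have \<kappa>: "\<kappa> > 0" using L n2 by (simp add: \<kappa>_def)
  have a1: "\<alpha>1 > 0" using L n1 by (simp add: \<alpha>1_def)
  have a3: "\<alpha>3 > 0" using L n3 by (simp add: \<alpha>3_def)
  have k2: "\<kappa>\<^sup>2 = L\<^sup>2 * (r2 - \<nu>)" using n2 by (simp add: \<kappa>_def power_mult_distrib)
  have a12: "\<alpha>1\<^sup>2 = L\<^sup>2 * (\<nu> - r1)" using n1 by (simp add: \<alpha>1_def power_mult_distrib)
  have a32: "\<alpha>3\<^sup>2 = L\<^sup>2 * (\<nu> - r3)" using n3 by (simp add: \<alpha>3_def power_mult_distrib)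
  have \<delta>: "\<delta> > 0" using F by (simp add: Fn_def \<kappa>_def \<alpha>1_def \<alpha>3_def A1_def A3_def \<delta>_def)
  have A1b: "0 < A1" "A1 < pi/2"
    using a1 \<kappa> arctan_ubound[of "\<alpha>1 / \<kappa>"] unfolding A1_def by auto
  have A3b: "0 < A3" "A3 < pi/2"
    using a3 \<kappa> arctan_ubound[of "\<alpha>3 / \<kappa>"] unfolding A3_def by auto
  have P: "P1 > 0" "P3 > 0" using A1b A3b by (auto simp: P1_def P3_def)
  have \<delta>P: "\<delta> < P1 + P3" using small by (simp add: \<delta>_def P1_def P3_def \<kappa>_def)
  have kth: "\<kappa> - \<theta> = A3 + \<delta> * P3 / (P1 + P3)"
    using P by (simp add: \<theta>_def \<delta>_def field_simps)
  have q1: "0 < \<delta> * P1 / (P1 + P3)" "\<delta> * P1 / (P1 + P3) < P1"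
  proof -
    show "0 < \<delta> * P1 / (P1 + P3)" using P \<delta> by simp
    have "\<delta> * P1 < (P1 + P3) * P1" by (rule mult_strict_right_mono[OF \<delta>P P(1)])
    then show "\<delta> * P1 / (P1 + P3) < P1" using P by (simp add: pos_divide_less_eq mult.commute)
  qed
  have q3: "0 < \<delta> * P3 / (P1 + P3)" "\<delta> * P3 / (P1 + P3) < P3"
  proof -
    show "0 < \<delta> * P3 / (P1 + P3)" using P \<delta> by simp
    have "\<delta> * P3 < (P1 + P3) * P3" by (rule mult_strict_right_mono[OF \<delta>P P(2)])
    then show "\<delta> * P3 / (P1 + P3) < P3" using P by (simp add: pos_divide_less_eq mult.commute)
  qed
  have th: "A1 < \<theta>" "\<theta> < pi/2" using q1 \<theta>_def P1_def by linarith+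
  have kthb: "A3 < \<kappa> - \<theta>" "\<kappa> - \<theta> < pi/2" using q3 kth P3_def by linarith+
  have sth: "sin \<theta> > 0" using th A1b by (intro sin_gt_zero) auto
  have skth: "sin (\<kappa> - \<theta>) > 0" using kthb A3b by (intro sin_gt_zero) auto
  have cth: "cos \<theta> > 0" using th A1b by (intro cos_gt_zero_pi) auto
  have ckth: "cos (\<kappa> - \<theta>) > 0" using kthb A3b by (intro cos_gt_zero_pi) auto
  define p where "p = \<kappa> * tan \<theta>"
  define q where "q = \<kappa> * tan (\<kappa> - \<theta>)"
  have p: "\<alpha>1 < p"
  proof -
    have "tan A1 < tan \<theta>" using tan_monotone[of A1 \<theta>] th A1b by simp
    then have "\<alpha>1 / \<kappa> < tan \<theta>" by (simp add: A1_def tan_arctan)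
    then show ?thesis using \<kappa> by (simp add: p_def divide_less_eq mult.commute)
  qed
  have q: "\<alpha>3 < q"
  proof -
    have "tan A3 < tan (\<kappa> - \<theta>)" using tan_monotone[of A3 "\<kappa> - \<theta>"] kthb A3b by simp
    then have "\<alpha>3 / \<kappa> < tan (\<kappa> - \<theta>)" by (simp add: A3_def tan_arctan)
    then show ?thesis using \<kappa> by (simp add: q_def divide_less_eq mult.commute)
  qed
  define E1 where "E1 = 1 - \<alpha>1 / p"
  define E3 where "E3 = 1 - \<alpha>3 / q"
  have E1: "0 < E1" "E1 < 1" using p a1 by (auto simp: E1_def field_simps)
  have E3: "0 < E3" "E3 < 1" using q a3 by (auto simp: E3_def field_simps)
  define c1 where "c1 = \<kappa> * sin \<theta> / \<alpha>1"
  define c3 where "c3 = \<kappa> * sin (\<kappa> - \<theta>) / \<alpha>3"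
  have c1: "c1 > 0" using \<kappa> sth a1 by (simp add: c1_def)
  have c3: "c3 > 0" using \<kappa> skth a3 by (simp add: c3_def)
  define f1 where "f1 = (\<lambda>x. c1 * (exp (\<alpha>1 * x) - E1))"
  define f1' where "f1' = (\<lambda>x. c1 * \<alpha>1 * exp (\<alpha>1 * x))"
  define f1'' where "f1'' = (\<lambda>x. c1 * \<alpha>1\<^sup>2 * exp (\<alpha>1 * x))"
  define f2 where "f2 = (\<lambda>x. cos (\<kappa> * x - \<theta>))"
  define f2' where "f2' = (\<lambda>x. - \<kappa> * sin (\<kappa> * x - \<theta>))"
  define f2'' where "f2'' = (\<lambda>x. - (\<kappa>\<^sup>2) * cos (\<kappa> * x - \<theta>))"
  define f3 where "f3 = (\<lambda>x. c3 * (exp (- \<alpha>3 * (x - 1)) - E3))"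
  define f3' where "f3' = (\<lambda>x. - c3 * \<alpha>3 * exp (- \<alpha>3 * (x - 1)))"
  define f3'' where "f3'' = (\<lambda>x. c3 * \<alpha>3\<^sup>2 * exp (- \<alpha>3 * (x - 1)))"
  have d1: "\<And>x. (f1 has_real_derivative f1' x) (at x)"
    unfolding f1_def f1'_def by (auto intro!: derivative_eq_intros)
  have d1': "\<And>x. (f1' has_real_derivative f1'' x) (at x)"
    unfolding f1'_def f1''_def by (auto intro!: derivative_eq_intros simp: power2_eq_square)
  have d2: "\<And>x. (f2 has_real_derivative f2' x) (at x)"
    unfolding f2_def f2'_def by (auto intro!: derivative_eq_intros)
  have d2': "\<And>x. (f2' has_real_derivative f2'' x) (at x)"
    unfolding f2'_def f2''_def by (auto intro!: derivative_eq_intros simp: power2_eq_square)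
  have d3: "\<And>x. (f3 has_real_derivative f3' x) (at x)"
    unfolding f3_def f3'_def by (auto intro!: derivative_eq_intros)
  have d3': "\<And>x. (f3' has_real_derivative f3'' x) (at x)"
    unfolding f3'_def f3''_def by (auto intro!: derivative_eq_intros simp: power2_eq_square)
  have m0: "f1 0 = f2 0"
    using a1 \<kappa> sth cth by (simp add: f1_def f2_def c1_def E1_def p_def tan_def field_simps)
  have m0': "f1' 0 = f2' 0" using a1 by (simp add: f1'_def f2'_def c1_def)
  have m1: "f2 1 = f3 1"
    using a3 \<kappa> skth ckth by (simp add: f3_def f2_def c3_def E3_def q_def tan_def field_simps)
  have m1': "f2' 1 = f3' 1" using a3 by (simp add: f2'_def f3'_def c3_def)
  define a where "a = ln E1 / \<alpha>1"
  define b where "b = 1 - ln E3 / \<alpha>3"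
  have a: "a < 0" using E1 a1 by (simp add: a_def divide_neg_pos ln_less_zero)
  have b: "b > 1" using E3 a3 by (simp add: b_def divide_neg_pos ln_less_zero)
  define \<psi> where "\<psi> = glue f1 f2 f3"
  define \<psi>' where "\<psi>' = glue f1' f2' f3'"
  define \<psi>2 where "\<psi>2 = glue f1'' f2'' f3''"
  have \<psi>d: "\<And>x. (\<psi> has_real_derivative \<psi>' x) (at x)"
    unfolding \<psi>_def \<psi>'_def by (rule glue_deriv[OF d1 d2 d3 m0 m0' m1 m1'])
  show False
  proof (rule touch[OF W pos AE L, of a b \<psi> \<psi>' \<psi>2 "- \<nu>"])
    show "a < b" using a b by simp
    show "continuous_on {a..b} \<psi>"
      using \<psi>d by (meson DERIV_isCont continuous_at_imp_continuous_on)
    show "\<psi> a = 0" using a a1 E1 by (simp add: \<psi>_def glue_def f1_def a_def)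
    have "\<psi> b = f3 b" using b by (simp add: \<psi>_def glue_def)
    moreover have "- \<alpha>3 * (b - 1) = ln E3" using a3 by (simp add: b_def)
    ultimately show "\<psi> b = 0" using E3 by (simp add: f3_def)
    show "- \<nu> < lam" by fact
    fix x assume x: "a < x" "x < b"
    show "(\<psi> has_real_derivative \<psi>' x) (at x)" by (rule \<psi>d)
    show "(\<psi>' has_real_derivative \<psi>2 x) (at x within {x..})"
      unfolding \<psi>'_def \<psi>2_def by (rule glue_rderiv[OF d1' d2' d3'])
    consider "x < 0" | "0 \<le> x \<and> x < 1" | "x \<ge> 1" by linarith
    then show "0 < \<psi> x"
    proof cases
      case 1
      have "exp (\<alpha>1 * a) < exp (\<alpha>1 * x)" using x a1 by simp
      moreover have "exp (\<alpha>1 * a) = E1" using a1 E1 by (simp add: a_def)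
      ultimately show ?thesis using 1 c1 by (simp add: \<psi>_def glue_def f1_def)
    next
      case 2
      have "- (pi/2) < \<kappa> * x - \<theta>" using th \<kappa> 2 by (smt (verit) mult_nonneg_nonneg)
      moreover have "\<kappa> * x - \<theta> < pi/2"
      proof -
        have "\<kappa> * x \<le> \<kappa>" using 2 \<kappa> by (simp add: mult_le_cancel_left1)
        then show ?thesis using kthb by linarith
      qed
      ultimately show ?thesis using 2 by (simp add: \<psi>_def glue_def f2_def cos_gt_zero_pi)
    next
      case 3
      have h1: "exp (- \<alpha>3 * (b - 1)) < exp (- \<alpha>3 * (x - 1))" using x a3 by simp
      have h2: "exp (- \<alpha>3 * (b - 1)) = E3" using a3 E3 by (simp add: b_def)
      have "0 < exp (- \<alpha>3 * (x - 1)) - E3" using h1 h2 by linarith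
      then have "0 < c3 * (exp (- \<alpha>3 * (x - 1)) - E3)" using c3 by simp
      then show ?thesis using 3 by (simp add: \<psi>_def glue_def f3_def)
    qed
    have L2: "L\<^sup>2 > 0" using L by simp
    consider "x < 0" | "0 \<le> x \<and> x < 1" | "x \<ge> 1" by linarith
    then show "- (L\<^sup>2) * (mfun r1 r2 r3 x + - \<nu>) * \<psi> x \<le> \<psi>2 x"
    proof cases
      case 1
      have e1: "- (L\<^sup>2) * (r1 + - \<nu>) = \<alpha>1\<^sup>2" using a12 by (simp add: algebra_simps)
      have "- (L\<^sup>2) * (mfun r1 r2 r3 x + - \<nu>) * \<psi> x = \<alpha>1\<^sup>2 * (c1 * (exp (\<alpha>1 * x) - E1))"
        using 1 e1 by (simp add: mfun_def \<psi>_def glue_def f1_def)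
      also have "\<dots> = c1 * \<alpha>1\<^sup>2 * exp (\<alpha>1 * x) - c1 * \<alpha>1\<^sup>2 * E1" by (simp add: algebra_simps)
      also have "\<dots> \<le> c1 * \<alpha>1\<^sup>2 * exp (\<alpha>1 * x)" using c1 E1 by simp
      also have "\<dots> = \<psi>2 x" using 1 by (simp add: \<psi>2_def glue_def f1''_def)
      finally show ?thesis .
    next
      case 2
      have e2: "- (L\<^sup>2) * (r2 + - \<nu>) = - (\<kappa>\<^sup>2)" using k2 by (simp add: algebra_simps)
      show ?thesis
        using 2 e2 by (simp add: mfun_def \<psi>_def \<psi>2_def glue_def f2_def f2''_def)
    next
      case 3
      have e3: "- (L\<^sup>2) * (r3 + - \<nu>) = \<alpha>3\<^sup>2" using a32 by (simp add: algebra_simps)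
      have "- (L\<^sup>2) * (mfun r1 r2 r3 x + - \<nu>) * \<psi> x = \<alpha>3\<^sup>2 * (c3 * (exp (- \<alpha>3 * (x - 1)) - E3))"
        using 3 e3 by (simp add: mfun_def \<psi>_def glue_def f3_def)
      also have "\<dots> = c3 * \<alpha>3\<^sup>2 * exp (- \<alpha>3 * (x - 1)) - c3 * \<alpha>3\<^sup>2 * E3" by (simp add: algebra_simps)
      also have "\<dots> \<le> c3 * \<alpha>3\<^sup>2 * exp (- \<alpha>3 * (x - 1))" using c3 E3 by simp
      also have "\<dots> = \<psi>2 x" using 3 by (simp add: \<psi>2_def glue_def f3''_def)
      finally show ?thesis .
    qed
  qed
qed



lemma sub:
  assumes L: "L > 0" and n1: "r1 < \<nu>" and n3: "r3 < \<nu>" and n2: "\<nu> < r2"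
    and F: "Fn L r1 r3 r2 \<nu> > 0" and A: "adm L r1 r2 r3 lam"
  shows "lam \<le> - \<nu>"
proof (cases "L * sqrt (r2 - \<nu>) < pi")
  case True show ?thesis by (rule sub_small[OF L n1 n3 n2 F True A])
next
  case False then show ?thesis using sub_big[OF L n2 _ A] by simp
qed

lemma Fn_mono_nu:
  assumes L: "L > 0" and n1: "r1 \<le> \<nu>" and n3: "r3 \<le> \<nu>" and nn: "\<nu> < \<nu>'" and n2: "\<nu>' < r2"
  shows "Fn L r1 r3 r2 \<nu>' < Fn L r1 r3 r2 \<nu>"
proof -
  have k: "L * sqrt (r2 - \<nu>') < L * sqrt (r2 - \<nu>)" using L nn by simp
  have k': "0 < L * sqrt (r2 - \<nu>')" using L n2 by simp
  have "arctan (L * sqrt (\<nu> - r1) / (L * sqrt (r2 - \<nu>))) \<le> arctan (L * sqrt (\<nu>' - r1) / (L * sqrt (r2 - \<nu>')))"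
    using L nn n1 k k' by (intro arctan_monotone' frac_le) auto
  moreover have "arctan (L * sqrt (\<nu> - r3) / (L * sqrt (r2 - \<nu>))) \<le> arctan (L * sqrt (\<nu>' - r3) / (L * sqrt (r2 - \<nu>')))"
    using L nn n3 k k' by (intro arctan_monotone' frac_le) auto
  ultimately show ?thesis using k unfolding Fn_def by linarith
qed

lemma Fn_mono_r2:
  assumes L: "L > 0" and n1: "r1 \<le> \<nu>" and n3: "r3 \<le> \<nu>" and n2: "\<nu> < r2" and rr: "r2 < r2'"
  shows "Fn L r1 r3 r2 \<nu> < Fn L r1 r3 r2' \<nu>"
proof -
  have k: "L * sqrt (r2 - \<nu>) < L * sqrt (r2' - \<nu>)" using L rr by simp
  have k': "0 < L * sqrt (r2 - \<nu>)" using L n2 by simp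
  have "arctan (L * sqrt (\<nu> - r1) / (L * sqrt (r2' - \<nu>))) \<le> arctan (L * sqrt (\<nu> - r1) / (L * sqrt (r2 - \<nu>)))"
    using L n1 k k' by (intro arctan_monotone' frac_le) auto
  moreover have "arctan (L * sqrt (\<nu> - r3) / (L * sqrt (r2' - \<nu>))) \<le> arctan (L * sqrt (\<nu> - r3) / (L * sqrt (r2 - \<nu>)))"
    using L n3 k k' by (intro arctan_monotone' frac_le) auto
  ultimately show ?thesis using k unfolding Fn_def by linarith
qed

lemma Fn_cont_nu:
  assumes L: "L > 0" and b: "b < r2"
  shows "continuous_on {a..b} (Fn L r1 r3 r2)"
proof -
  have nz: "\<And>x. x \<in> {a..b} \<Longrightarrow> L * sqrt (r2 - x) \<noteq> 0" using L b by auto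
  show ?thesis unfolding Fn_def[abs_def]
    by (intro continuous_intros) (use nz in auto)
qed

lemma Fn_cont_r2:
  assumes L: "L > 0" and n: "\<nu> < r0"
  shows "isCont (\<lambda>r. Fn L r1 r3 r \<nu>) r0"
proof -
  have nz: "L * sqrt (r0 - \<nu>) \<noteq> 0" using L n by auto
  show ?thesis unfolding Fn_def
    by (intro continuous_intros nz)
qed

lemma Fn_neg_exists:
  assumes L: "L > 0" and r: "max r1 r3 < r2"
  shows "\<exists>\<nu>. max r1 r3 < \<nu> \<and> \<nu> < r2 \<and> Fn L r1 r3 r2 \<nu> < 0"
proof -
  define M where "M = max r1 r3"
  define s where "s = min ((r2 - M) / 2) ((pi / (2 * L))\<^sup>2 / 2)"
  have s0: "0 < s" using r L by (auto simp: s_def M_def)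
  have s1: "s \<le> (r2 - M) / 2" unfolding s_def by (rule min.cobounded1)
  have s3: "s \<le> (pi / (2 * L))\<^sup>2 / 2" unfolding s_def by (rule min.cobounded2)
  have "(pi / (2 * L))\<^sup>2 > 0" using L by simp
  then have s2: "s < (pi / (2 * L))\<^sup>2" using s3 by linarith
  note s = s0 s1 s2
  define \<nu> where "\<nu> = r2 - s"
  have \<nu>: "M < \<nu>" "\<nu> < r2" using s by (auto simp: \<nu>_def)
  have ks: "sqrt s < pi / (2 * L)"
    using real_sqrt_less_mono[OF s(3)] L by simp
  have kpos: "L * sqrt s > 0" using L s by simp
  have "L * sqrt s < L * (pi / (2 * L))" using mult_strict_left_mono[OF ks L] .
  then have k: "L * sqrt s < pi / 2" using L by simp
  have one: "1 \<le> L * sqrt (\<nu> - r) / (L * sqrt (r2 - \<nu>))" if "r \<le> M" for r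
  proof -
    have "sqrt s \<le> sqrt (\<nu> - r)" using s that by (intro real_sqrt_le_mono) (auto simp: \<nu>_def)
    then have h: "L * sqrt s \<le> L * sqrt (\<nu> - r)" using L by simp
    have e: "r2 - \<nu> = s" by (simp add: \<nu>_def)
    show ?thesis unfolding e using h kpos by (simp only: le_divide_eq_1_pos)
  qed
  have p: "pi / 4 \<le> arctan (L * sqrt (\<nu> - r) / (L * sqrt (r2 - \<nu>)))" if "r \<le> M" for r
    using arctan_monotone'[OF one[OF that]] by (simp add: arctan_one)
  have p1: "pi / 4 \<le> arctan (L * sqrt (\<nu> - r1) / (L * sqrt (r2 - \<nu>)))" by (rule p) (simp add: M_def)
  have p3: "pi / 4 \<le> arctan (L * sqrt (\<nu> - r3) / (L * sqrt (r2 - \<nu>)))" by (rule p) (simp add: M_def)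
  have e: "r2 - \<nu> = s" by (simp add: \<nu>_def)
  have "Fn L r1 r3 r2 \<nu> \<le> L * sqrt s - pi / 2"
    using p1 p3 unfolding Fn_def e by linarith
  then have "Fn L r1 r3 r2 \<nu> < 0" using k by simp
  then show ?thesis using \<nu> unfolding M_def by blast
qed

lemma Fn_pos_large:
  assumes L: "L > 0" and n: "\<nu> < r2" and big: "L * sqrt (r2 - \<nu>) > pi"
  shows "Fn L r1 r3 r2 \<nu> > 0"
  using arctan_ubound[of "L * sqrt (\<nu> - r1) / (L * sqrt (r2 - \<nu>))"]
    arctan_ubound[of "L * sqrt (\<nu> - r3) / (L * sqrt (r2 - \<nu>))"] big
  unfolding Fn_def by linarith

definition mus :: "real \<Rightarrow> real \<Rightarrow> real \<Rightarrow> real \<Rightarrow> real" where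
  "mus L r1 r3 r2 = (if Fn L r1 r3 r2 (max r1 r3) \<le> 0 then max r1 r3
     else (THE \<nu>. max r1 r3 < \<nu> \<and> \<nu> < r2 \<and> Fn L r1 r3 r2 \<nu> = 0))"

lemma root_ex1:
  assumes L: "L > 0" and r: "max r1 r3 < r2" and F: "Fn L r1 r3 r2 (max r1 r3) > 0"
  shows "\<exists>!\<nu>. max r1 r3 < \<nu> \<and> \<nu> < r2 \<and> Fn L r1 r3 r2 \<nu> = 0"
proof -
  define M where "M = max r1 r3"
  obtain \<nu>1 where \<nu>1: "M < \<nu>1" "\<nu>1 < r2" "Fn L r1 r3 r2 \<nu>1 < 0"
    using Fn_neg_exists[OF L r] unfolding M_def by blast
  obtain x where x: "M \<le> x" "x \<le> \<nu>1" "Fn L r1 r3 r2 x = 0"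
    using IVT2'[of "Fn L r1 r3 r2" \<nu>1 0 M] \<nu>1 F Fn_cont_nu[OF L \<nu>1(2), of M r1 r3]
    unfolding M_def by auto
  have xM: "x \<noteq> M" using x F by (auto simp: M_def)
  have ex: "M < x \<and> x < r2 \<and> Fn L r1 r3 r2 x = 0" using x xM \<nu>1 by auto
  moreover have "y = x" if "M < y \<and> y < r2 \<and> Fn L r1 r3 r2 y = 0" for y
  proof (rule ccontr)
    assume "y \<noteq> x"
    then consider "y < x" | "x < y" by linarith
    then show False
    proof cases
      case 1 then show False using Fn_mono_nu[OF L, of r1 y r3 x r2] that ex by (auto simp: M_def)
    next
      case 2 then show False using Fn_mono_nu[OF L, of r1 x r3 y r2] that ex by (auto simp: M_def)
    qed
  qed
  ultimately show ?thesis unfolding M_def by blast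
qed

lemma mus_root:
  assumes L: "L > 0" and r: "max r1 r3 < r2" and F: "Fn L r1 r3 r2 (max r1 r3) > 0"
  shows "max r1 r3 < mus L r1 r3 r2 \<and> mus L r1 r3 r2 < r2 \<and> Fn L r1 r3 r2 (mus L r1 r3 r2) = 0"
proof -
  have "mus L r1 r3 r2 = (THE \<nu>. max r1 r3 < \<nu> \<and> \<nu> < r2 \<and> Fn L r1 r3 r2 \<nu> = 0)"
    using F by (simp add: mus_def)
  then show ?thesis using theI'[OF root_ex1[OF L r F]] by simp
qed

lemma mus_basic:
  assumes L: "L > 0" and r: "max r1 r3 < r2"
  shows "max r1 r3 \<le> mus L r1 r3 r2" "mus L r1 r3 r2 < r2" "Fn L r1 r3 r2 (mus L r1 r3 r2) \<le> 0"
proof -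
  have "max r1 r3 \<le> mus L r1 r3 r2 \<and> mus L r1 r3 r2 < r2 \<and> Fn L r1 r3 r2 (mus L r1 r3 r2) \<le> 0"
  proof (cases "Fn L r1 r3 r2 (max r1 r3) \<le> 0")
    case True then show ?thesis using r by (simp add: mus_def)
  next
    case False then show ?thesis using mus_root[OF L r] by fastforce
  qed
  then show "max r1 r3 \<le> mus L r1 r3 r2" "mus L r1 r3 r2 < r2" "Fn L r1 r3 r2 (mus L r1 r3 r2) \<le> 0"
    by auto
qed

lemma mus_gt:
  assumes L: "L > 0" and r: "max r1 r3 < r2" and n: "max r1 r3 < \<nu>" "\<nu> < r2"
    and F: "Fn L r1 r3 r2 \<nu> > 0"
  shows "\<nu> < mus L r1 r3 r2"
proof (cases "Fn L r1 r3 r2 (max r1 r3) \<le> 0")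
  case True
  have "Fn L r1 r3 r2 \<nu> < Fn L r1 r3 r2 (max r1 r3)" using Fn_mono_nu[OF L _ _ n(1) n(2)] by simp
  then show ?thesis using True F by simp
next
  case False
  then have m: "max r1 r3 < mus L r1 r3 r2 \<and> mus L r1 r3 r2 < r2 \<and> Fn L r1 r3 r2 (mus L r1 r3 r2) = 0"
    using mus_root[OF L r] by simp
  show ?thesis
  proof (rule ccontr)
    assume "\<not> \<nu> < mus L r1 r3 r2"
    then consider "\<nu> = mus L r1 r3 r2" | "mus L r1 r3 r2 < \<nu>" by linarith
    then show False
    proof cases
      case 1 then show False using m F by simp
    next
      case 2
      have "Fn L r1 r3 r2 \<nu> < Fn L r1 r3 r2 (mus L r1 r3 r2)"
        by (rule Fn_mono_nu[OF L]) (use m n 2 in auto)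
      then show False using m F by simp
    qed
  qed
qed

lemma mus_lt:
  assumes L: "L > 0" and r: "max r1 r3 < r2" and n: "max r1 r3 < \<nu>" "\<nu> < r2"
    and F: "Fn L r1 r3 r2 \<nu> < 0"
  shows "mus L r1 r3 r2 < \<nu>"
proof (cases "Fn L r1 r3 r2 (max r1 r3) \<le> 0")
  case True then show ?thesis using n by (simp add: mus_def)
next
  case False
  then have m: "max r1 r3 < mus L r1 r3 r2 \<and> mus L r1 r3 r2 < r2 \<and> Fn L r1 r3 r2 (mus L r1 r3 r2) = 0"
    using mus_root[OF L r] by simp
  show ?thesis
  proof (rule ccontr)
    assume "\<not> mus L r1 r3 r2 < \<nu>"
    then consider "\<nu> = mus L r1 r3 r2" | "\<nu> < mus L r1 r3 r2" by linarith
    then show False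
    proof cases
      case 1 then show False using m F by simp
    next
      case 2
      have "Fn L r1 r3 r2 (mus L r1 r3 r2) < Fn L r1 r3 r2 \<nu>"
        by (rule Fn_mono_nu[OF L]) (use m n 2 in auto)
      then show False using m F by simp
    qed
  qed
qed

lemma lambda1_eq:
  assumes L: "L > 0" and r: "max r1 r3 < r2"
  shows "lambda1 L r1 r3 r2 = - mus L r1 r3 r2"
proof -
  note mb = mus_basic[OF L r]
  have mem: "- mus L r1 r3 r2 \<in> {lam. adm L r1 r2 r3 lam}"
    using super[OF L _ _ mb(2) mb(3)] mb(1) by simp
  have ub: "lam \<le> - mus L r1 r3 r2" if A: "adm L r1 r2 r3 lam" for lam
  proof (rule ccontr)
    assume c: "\<not> lam \<le> - mus L r1 r3 r2"
    have l1: "lam \<le> - r1" by (rule adm_le_r1[OF A L])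
    have l3: "lam \<le> - r3" by (rule adm_le_r3[OF A L])
    have Mm: "max r1 r3 < mus L r1 r3 r2" using c l1 l3 by linarith
    then have FM: "Fn L r1 r3 r2 (max r1 r3) > 0" by (auto simp: mus_def split: if_splits)
    note mr = mus_root[OF L r FM]
    define \<nu> where "\<nu> = (mus L r1 r3 r2 + max (max r1 r3) (- lam)) / 2"
    have \<nu>: "max r1 r3 < \<nu>" "\<nu> < mus L r1 r3 r2" "- lam < \<nu>"
      using Mm c unfolding \<nu>_def by auto
    have n1: "r1 \<le> \<nu>" "r3 \<le> \<nu>" using \<nu>(1) by auto
    have "Fn L r1 r3 r2 (mus L r1 r3 r2) < Fn L r1 r3 r2 \<nu>"
      by (rule Fn_mono_nu[OF L n1 \<nu>(2)]) (use mr in linarith)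
    then have F: "Fn L r1 r3 r2 \<nu> > 0" using mr by simp
    have "lam \<le> - \<nu>" using sub[OF L _ _ _ F A] \<nu> mr by simp
    then show False using \<nu>(3) by simp
  qed
  show ?thesis unfolding lambda1_adm
    by (rule cSup_eq_maximum[OF mem]) (use ub in auto)
qed



lemma Fn_M:
  assumes L: "L > 0" and r: "max r1 r3 < r2"
  shows "Fn L r1 r3 r2 (max r1 r3) = L * sqrt (r2 - max r1 r3) - arctan (sqrt \<bar>r1 - r3\<bar> / sqrt (r2 - max r1 r3))"
proof -
  have c: "L * sqrt x / (L * sqrt (r2 - max r1 r3)) = sqrt x / sqrt (r2 - max r1 r3)" for x
    using L by simp
  show ?thesis
  proof (cases "r1 \<le> r3")
    case True
    then show ?thesis unfolding Fn_def c by (simp add: max_def abs_if)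
  next
    case False
    then show ?thesis unfolding Fn_def c by (simp add: max_def abs_if)
  qed
qed

lemma Lunder_eq:
  assumes r: "max r1 r3 < r2" and ne: "r1 \<noteq> r3"
  shows "sqrt (r2 - max r1 r3) * Lunder r1 r3 r2 = arctan (sqrt \<bar>r1 - r3\<bar> / sqrt (r2 - max r1 r3))"
proof -
  define y where "y = sqrt ((r2 - max r1 r3) / \<bar>r1 - r3\<bar>)"
  have D: "\<bar>r1 - r3\<bar> > 0" using ne by simp
  have y: "y > 0" using r D by (simp add: y_def)
  have "arccot y = arctan (1 / y)"
    using arctan_inverse[of y] y by (simp add: arccot_def inverse_eq_divide)
  moreover have "1 / y = sqrt \<bar>r1 - r3\<bar> / sqrt (r2 - max r1 r3)"
    by (simp add: y_def real_sqrt_divide)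
  moreover have "sqrt (r2 - max r1 r3) > 0" using r by simp
  ultimately show ?thesis using ne by (simp add: Lunder_def y_def)
qed

lemma FM_sign:
  assumes L: "L > 0" and r: "max r1 r3 < r2"
  shows "L > Lunder r1 r3 r2 \<Longrightarrow> Fn L r1 r3 r2 (max r1 r3) > 0"
    and "L < Lunder r1 r3 r2 \<Longrightarrow> Fn L r1 r3 r2 (max r1 r3) < 0"
proof -
  have s: "sqrt (r2 - max r1 r3) > 0" using r by simp
  have F: "Fn L r1 r3 r2 (max r1 r3) = sqrt (r2 - max r1 r3) * (L - Lunder r1 r3 r2)"
  proof (cases "r1 = r3")
    case True then show ?thesis using Fn_M[OF L r] by (simp add: Lunder_def)
  next
    case False then show ?thesis using Fn_M[OF L r] Lunder_eq[OF r False] by (simp add: algebra_simps)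
  qed
  show "L > Lunder r1 r3 r2 \<Longrightarrow> Fn L r1 r3 r2 (max r1 r3) > 0" using F s by simp
  show "L < Lunder r1 r3 r2 \<Longrightarrow> Fn L r1 r3 r2 (max r1 r3) < 0" using F s by (simp add: mult_pos_neg)
qed

lemma mus_cont:
  assumes L: "L > 0" and r0: "max r1 r3 < r0"
  shows "isCont (mus L r1 r3) r0"
proof -
  define M where "M = max r1 r3"
  define m0 where "m0 = mus L r1 r3 r0"
  have mb: "M \<le> m0" "m0 < r0" "Fn L r1 r3 r0 m0 \<le> 0"
    using mus_basic[OF L r0] by (auto simp: M_def m0_def)
  have evM: "eventually (\<lambda>r. M < r) (at r0)"
    using order_tendstoD(1)[OF tendsto_ident_at, of M r0 UNIV] r0 by (simp add: M_def)
  have evF: "eventually (\<lambda>r. c < Fn L r1 r3 r \<nu>) (at r0)" if "\<nu> < r0" "c < Fn L r1 r3 r0 \<nu>" for \<nu> c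
    using order_tendstoD(1)[OF Fn_cont_r2[OF L that(1), unfolded isCont_def]] that(2) .
  have evF': "eventually (\<lambda>r. Fn L r1 r3 r \<nu> < c) (at r0)" if "\<nu> < r0" "Fn L r1 r3 r0 \<nu> < c" for \<nu> c
    using order_tendstoD(2)[OF Fn_cont_r2[OF L that(1), unfolded isCont_def]] that(2) .
  have evgt: "eventually (\<lambda>r. \<nu> < r) (at r0)" if "\<nu> < r0" for \<nu>
    using order_tendstoD(1)[OF tendsto_ident_at, of \<nu> r0 UNIV] that by simp
  show ?thesis unfolding isCont_def m0_def[symmetric]
  proof (rule order_tendstoI)
    fix a assume a: "m0 < a"
    define \<nu> where "\<nu> = min a ((m0 + r0) / 2)"
    have \<nu>1: "\<nu> \<le> (m0 + r0) / 2" "\<nu> \<le> a" "\<nu> = a \<or> \<nu> = (m0 + r0) / 2" by (auto simp: \<nu>_def min_def)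
    have \<nu>: "m0 < \<nu>" "\<nu> < r0" "\<nu> \<le> a" using a mb \<nu>1 by auto
    have n1: "r1 \<le> m0" "r3 \<le> m0" using mb by (auto simp: M_def)
    have "Fn L r1 r3 r0 \<nu> < Fn L r1 r3 r0 m0" by (rule Fn_mono_nu[OF L n1 \<nu>(1) \<nu>(2)])
    then have "Fn L r1 r3 r0 \<nu> < 0" using mb by simp
    then have "eventually (\<lambda>r. Fn L r1 r3 r \<nu> < 0) (at r0)" by (rule evF'[OF \<nu>(2)])
    then show "eventually (\<lambda>r. mus L r1 r3 r < a) (at r0)"
      using evM evgt[OF \<nu>(2)]
    proof eventually_elim
      case (elim r)
      have "mus L r1 r3 r < \<nu>"
        by (rule mus_lt[OF L]) (use elim \<nu> mb in \<open>auto simp: M_def\<close>)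
      then show ?case using \<nu> by simp
    qed
  next
    fix a assume a: "a < m0"
    show "eventually (\<lambda>r. a < mus L r1 r3 r) (at r0)"
    proof (cases "a < M")
      case True
      show ?thesis using evM
      proof eventually_elim
        case (elim r)
        then have "max r1 r3 < r" by (simp add: M_def)
        then have "max r1 r3 \<le> mus L r1 r3 r" by (rule mus_basic(1)[OF L])
        then show ?case using True unfolding M_def by linarith
      qed
    next
      case False
      then have Mm: "M < m0" using a by simp
      then have FM: "Fn L r1 r3 r0 M > 0" by (auto simp: m0_def M_def mus_def split: if_splits)
      have mr: "M < m0 \<and> m0 < r0 \<and> Fn L r1 r3 r0 m0 = 0"
        using mus_root[OF L r0] FM by (simp add: M_def m0_def)
      define \<nu> where "\<nu> = (a + m0) / 2"
      have \<nu>: "a < \<nu>" "\<nu> < m0" "M < \<nu>" using a False by (auto simp: \<nu>_def)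
      have \<nu>r: "\<nu> < r0" using \<nu> mr by simp
      have n1: "r1 \<le> \<nu>" "r3 \<le> \<nu>" using \<nu> by (auto simp: M_def)
      have "Fn L r1 r3 r0 m0 < Fn L r1 r3 r0 \<nu>" by (rule Fn_mono_nu[OF L n1 \<nu>(2)]) (use mr in simp)
      then have "0 < Fn L r1 r3 r0 \<nu>" using mr by simp
      then have "eventually (\<lambda>r. 0 < Fn L r1 r3 r \<nu>) (at r0)" by (rule evF[OF \<nu>r])
      then show ?thesis using evM evgt[OF \<nu>r]
      proof eventually_elim
        case (elim r)
        have "\<nu> < mus L r1 r3 r"
          by (rule mus_gt[OF L]) (use elim \<nu> in \<open>auto simp: M_def\<close>)
        then show ?case using \<nu> by simp
      qed
    qed
  qed
qed



theorem proposition4p2: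
  fixes r1 r3 L r2bar :: real
  assumes "r1 > 0" and "r3 > 0" and "L > 0"
    and "r2bar \<ge> max r1 r3"
    and "\<forall>r2. r2 > r2bar \<longrightarrow> L > Lunder r1 r3 r2"
    and "\<forall>r2. max r1 r3 < r2 \<and> r2 < r2bar \<longrightarrow> L < Lunder r1 r3 r2"
  shows "continuous_on {max r1 r3<..} (lambda1 L r1 r3)
    \<and> (\<forall>x\<in>{max r1 r3<..r2bar}. \<forall>y\<in>{max r1 r3<..r2bar}. lambda1 L r1 r3 x = lambda1 L r1 r3 y)
    \<and> (\<forall>x\<in>{r2bar<..}. \<forall>y\<in>{r2bar<..}. x < y \<longrightarrow> lambda1 L r1 r3 y < lambda1 L r1 r3 x)
    \<and> (lambda1 L r1 r3 \<longlongrightarrow> - max r1 r3) (at_right (max r1 r3))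
    \<and> filterlim (lambda1 L r1 r3) at_bot at_top"
proof -
  note L = assms(3)
  define M where "M = max r1 r3"
  have Mbar: "M \<le> r2bar" using assms(4) by (simp add: M_def)
  have eq: "lambda1 L r1 r3 r = - mus L r1 r3 r" if "M < r" for r
    using lambda1_eq[OF L] that by (simp add: M_def)
  have above: "Fn L r1 r3 r M > 0" if "r2bar < r" for r
    using FM_sign(1)[OF L, of r1 r3 r] assms(5) that Mbar by (simp add: M_def)
  have below: "Fn L r1 r3 r M < 0" if "M < r" "r < r2bar" for r
    using FM_sign(2)[OF L, of r1 r3 r] assms(6) that by (simp add: M_def)
  have atbar: "Fn L r1 r3 r2bar M \<le> 0" if Mb: "M < r2bar"
  proof (rule ccontr)
    assume "\<not> Fn L r1 r3 r2bar M \<le> 0"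
    then have pos: "0 < Fn L r1 r3 r2bar M" by simp
    have "((\<lambda>r. Fn L r1 r3 r M) \<longlongrightarrow> Fn L r1 r3 r2bar M) (at_left r2bar)"
      using Fn_cont_r2[OF L Mb, of r1 r3] by (simp add: isCont_def filterlim_at_split)
    from order_tendstoD(1)[OF this pos]
    have ev: "eventually (\<lambda>r. 0 < Fn L r1 r3 r M) (at_left r2bar)" .
    then obtain b where b: "b < r2bar" "\<And>y. b < y \<Longrightarrow> y < r2bar \<Longrightarrow> 0 < Fn L r1 r3 y M"
      unfolding eventually_at_left_field by blast
    define y where "y = (max b M + r2bar) / 2"
    have y: "b < y" "M < y" "y < r2bar" using b Mb by (auto simp: y_def)
    show False using b(2)[OF y(1) y(3)] below[OF y(2) y(3)] by simp
  qed
  have const: "lambda1 L r1 r3 r = - M" if "M < r" "r \<le> r2bar" for r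
  proof -
    have "Fn L r1 r3 r M \<le> 0"
    proof (cases "r < r2bar")
      case True then show ?thesis using below[OF that(1) True] by simp
    next
      case False then have "r = r2bar" using that by simp
      then show ?thesis using atbar that by simp
    qed
    then show ?thesis using eq[OF that(1)] by (simp add: mus_def M_def)
  qed
  have P1: "continuous_on {M<..} (lambda1 L r1 r3)"
  proof -
    have "isCont (lambda1 L r1 r3) r0" if r0: "M < r0" for r0
    proof -
      have iso: "isCont (\<lambda>r. - mus L r1 r3 r) r0"
        using mus_cont[OF L, of r1 r3 r0] r0 by (intro continuous_intros) (simp add: M_def)
      have ev: "eventually (\<lambda>r. lambda1 L r1 r3 r = - mus L r1 r3 r) (nhds r0)"
        using eventually_nhds_in_open[of "{M<..}" r0] r0 by (auto elim!: eventually_mono intro: eq)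
      show ?thesis using isCont_cong[OF ev] iso by simp
    qed
    then show ?thesis by (simp add: continuous_on_eq_continuous_at)
  qed
  have P2: "\<forall>x\<in>{M<..r2bar}. \<forall>y\<in>{M<..r2bar}. lambda1 L r1 r3 x = lambda1 L r1 r3 y"
    using const by auto
  have P3: "\<forall>x\<in>{r2bar<..}. \<forall>y\<in>{r2bar<..}. x < y \<longrightarrow> lambda1 L r1 r3 y < lambda1 L r1 r3 x"
  proof (intro ballI impI)
    fix x y assume x: "x \<in> {r2bar<..}" and y: "y \<in> {r2bar<..}" and xy: "x < y"
    have Mx: "M < x" "M < y" using x y Mbar by auto
    have mr: "M < mus L r1 r3 x \<and> mus L r1 r3 x < x \<and> Fn L r1 r3 x (mus L r1 r3 x) = 0"
      using mus_root[OF L, of r1 r3 x] above[of x] x Mx by (simp add: M_def)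
    have n1: "r1 \<le> mus L r1 r3 x" "r3 \<le> mus L r1 r3 x" using mr by (auto simp: M_def)
    have "Fn L r1 r3 x (mus L r1 r3 x) < Fn L r1 r3 y (mus L r1 r3 x)"
      by (rule Fn_mono_r2[OF L n1 _ xy]) (use mr in simp)
    then have "0 < Fn L r1 r3 y (mus L r1 r3 x)" using mr by simp
    moreover have "max r1 r3 < y" "max r1 r3 < mus L r1 r3 x" "mus L r1 r3 x < y"
      using mr Mx xy by (auto simp: M_def)
    ultimately have "mus L r1 r3 x < mus L r1 r3 y"
      using mus_gt[OF L, of r1 r3 y "mus L r1 r3 x"] by blast
    then show "lambda1 L r1 r3 y < lambda1 L r1 r3 x" using eq Mx by simp
  qed
  have P4: "(lambda1 L r1 r3 \<longlongrightarrow> - M) (at_right M)"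
  proof (rule tendsto_sandwich[of "\<lambda>r. - r" _ _ "\<lambda>_. - M"])
    show "eventually (\<lambda>r. - r \<le> lambda1 L r1 r3 r) (at_right M)"
      unfolding eventually_at_right_field
    proof (intro exI[of _ "M + 1"] conjI allI impI)
      fix r assume r: "M < r" "r < M + 1"
      have "mus L r1 r3 r < r" using mus_basic(2)[OF L, of r1 r3 r] r by (simp add: M_def)
      then show "- r \<le> lambda1 L r1 r3 r" using eq[OF r(1)] by simp
    qed simp
    show "eventually (\<lambda>r. lambda1 L r1 r3 r \<le> - M) (at_right M)"
      unfolding eventually_at_right_field
    proof (intro exI[of _ "M + 1"] conjI allI impI)
      fix r assume r: "M < r" "r < M + 1"
      have "M \<le> mus L r1 r3 r" using mus_basic(1)[OF L, of r1 r3 r] r by (simp add: M_def)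
      then show "lambda1 L r1 r3 r \<le> - M" using eq[OF r(1)] by simp
    qed simp
    show "((\<lambda>r. - r) \<longlongrightarrow> - M) (at_right M)"
      by (intro tendsto_intros)
    show "((\<lambda>_. - M) \<longlongrightarrow> - M) (at_right M)" by simp
  qed
  have P5: "filterlim (lambda1 L r1 r3) at_bot at_top"
    unfolding filterlim_at_bot
  proof
    fix Z :: real
    define \<nu> where "\<nu> = max M (- Z) + 1"
    define R where "R = \<nu> + (pi / L)\<^sup>2 + 1"
    show "eventually (\<lambda>r. lambda1 L r1 r3 r \<le> Z) at_top"
      unfolding eventually_at_top_linorder
    proof (intro exI[of _ R] allI impI)
      fix r assume r: "R \<le> r"
      have Mn: "M < \<nu>" by (simp add: \<nu>_def)
      have "(pi / L)\<^sup>2 \<ge> 0" by simp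
      then have nr: "\<nu> < r" using r unfolding R_def by linarith
      have "(pi / L)\<^sup>2 < r - \<nu>" using r by (simp add: R_def)
      then have "pi / L < sqrt (r - \<nu>)" by (rule real_less_rsqrt)
      then have big: "pi < L * sqrt (r - \<nu>)" using L by (simp add: divide_less_eq mult.commute)
      have F: "0 < Fn L r1 r3 r \<nu>" by (rule Fn_pos_large[OF L nr big])
      have "\<nu> < mus L r1 r3 r"
        by (rule mus_gt[OF L _ _ nr F]) (use Mn nr in \<open>auto simp: M_def\<close>)
      then show "lambda1 L r1 r3 r \<le> Z" using eq[of r] Mn nr by (simp add: \<nu>_def)
    qed
  qed
  show ?thesis using P1 P2 P3 P4 P5 unfolding M_def by blast
qed


end
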